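(* Let $1/3<\kappa<\gamma<1/2$, assume hypothesis (H), let $I=[a,b]\subset[0,T]$, $\varepsilon=b-a$, and let $z\in\mathcal A^\kappa_{f,h}(I;\mathbb R^n)$. Let $\tilde z$ be defined by $\tilde z_a=\tilde h\in\mathcal L_1$ and $\tilde\delta\tilde z=\mathcal J(\tilde dx\,z)$. Then $$\mathcal N[\tilde z;\tilde{\mathcal Q}^\kappa(I)]\le c_x\{\mathcal N[z;\mathcal C_1^0(I)]+\varepsilon^{\gamma-\kappa}\mathcal M[z;\mathcal A^\kappa_{f,h}(I)]+\varepsilon^{1-\kappa}\mathcal N[f;\mathcal C_2^1(I)]\}.$$
   Context: Measurable $\hat\phi:(0,\infty)\to\mathbb R$ and $T>0$ fixed. $\mathcal L_1(V)$: measurable $g$ with $\mathcal N[g;\mathcal L_1]=\int_0^\infty|\hat\phi(\xi)|(1+\xi)\|g(\xi)\|d\xi<\infty$. $\tilde{\mathcal C}_k(I;V)$: continuous maps from $\{t_1\ge\dots\ge t_k\}\subset I^k$ to $\mathcal L_1(V)$. $(\tilde\delta f)_{ts}(\xi)=f_t(\xi)-e^{-\xi(t-s)}f_s(\xi)$, $(\tilde\delta B)_{tus}(\xi)=B_{ts}-B_{tu}-e^{-\xi(t-u)}B_{us}$. $\mathcal N[B;\tilde{\mathcal C}^\mu_2]=\sup_{s<t}\mathcal N[B_{ts};\mathcal L_1]/|t-s|^\mu$; $\mathcal N[h;\tilde{\mathcal C}^\mu_3]=\inf\sum_i\sup_{s<u<t}\mathcal N[h^i_{tus};\mathcal L_1]|t-u|^{-\rho_i}|u-s|^{-(\mu-\rho_i)}$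 over $h=\sum_ih^i$, $\rho_i\in(0,\mu)$; $\mathcal N[f;\tilde{\mathcal C}^\mu_1]=\mathcal N[\tilde\delta f;\tilde{\mathcal C}^\mu_2]$. Paths: $\mathcal N[z;\mathcal C_1^0]=\sup\|z_s\|$, $\mathcal N[z;\mathcal C_1^\mu]=\sup\|z_t-z_s\|/|t-s|^\mu$, $\mathcal N[r;\mathcal C_2^\mu]=\sup\|r_{ts}\|/|t-s|^\mu$. $A\cdot B=\mathrm{Tr}(AB^* )$, $(u\otimes v)_{ij}=u_iv_j$. $\tilde\Lambda$: for $\mu>1$ and $h\in\tilde{\mathcal C}^\mu_3\cap\tilde\delta(\tilde{\mathcal C}_2)$, $\tilde\Lambda h$ is the unique element of $\tilde{\mathcal C}_2^\mu$ with $\tilde\delta\tilde\Lambda h=h$. Hypothesis (H): $\tilde x^1\in\tilde{\mathcal C}_2^\gamma([0,T];\mathbb R^{1,n})$, $\tilde x^2\in\tilde{\mathcal C}_2^{2\gamma}([0,T];\mathbb R^{n,n})$, $\tilde x^3\in\tilde{\mathcal C}_3^{3\gamma}([0,T];\mathbb R^{n,n})$, $\tilde\delta\tilde x^1=0$, $(\tilde\delta\tilde x^2)_{tus}=\tilde x^1_{tu}\otimes x^1_{us}+\tilde x^3_{tus}$, $x^1_{ts}=\int_0^\infty\tilde x^1_{ts}(\xi)\hat\phi(\xi)d\xi$. $\mathcal A^\kappa_{f,h}(I;\mathbb R^n)$ ($f$ with $\mathcal N[f;\mathcal C_2^1]<\infty$, $h\in\mathbb R^n$): $\gamma$-Hölder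 $z$ with $z_a=h$ and $(\delta z)_{ts}-f_{ts}=(x^1_{ts}\zeta^z_s)^*+r^z_{ts}$, $\zeta^z\in\mathcal C_1^\kappa(I;\mathbb R^{n,n})$, $r^z\in\mathcal C_2^{2\kappa}$; $\mathcal M[z;\mathcal A^\kappa_{f,h}]=\mathcal N[\zeta^z;\mathcal C_1^0]+\mathcal N[\zeta^z;\mathcal C_1^\kappa]+\mathcal N[r^z;\mathcal C_2^{2\kappa}]+\mathcal N[z;\mathcal C_1^\kappa]$. The integral is $\mathcal J_{ts}(\tilde dx\,z)=\tilde x^1_{ts}z_s+\tilde x^2_{ts}\cdot(\zeta^z_s)^*+\tilde\Lambda(H)_{ts}$ with $H_{tus}=\tilde x^1_{tu}(r^z_{us}+f_{us})+\tilde x^2_{tu}\cdot(\zeta^z_u-\zeta^z_s)^*-\tilde x^3_{tus}\cdot(\zeta^z_s)^*$. $\tilde{\mathcal Q}^\kappa(I;\mathbb R)$: $\tilde y\in\tilde{\mathcal C}_1$ with $(\tilde\delta\tilde y)_{ts}=(\tilde x^1_{ts}\zeta_s)^*+\tilde r_{ts}$, $\zeta\in\mathcal C_1^\kappa(\mathbb R^{n,1})$, $\tilde r\in\tilde{\mathcal C}^{2\kappa}_2$; norm $\mathcal N[\tilde y;\tilde{\mathcal C}_1^\kappa]+\mathcal N[\zeta;\mathcal C_1^0]+\mathcal N[\zeta;\mathcal C_1^\kappa]+\mathcal N[\tilde r;\tilde{\mathcal C}^{2\kappa}_2]$; here $\tilde z$ is decomposed with $\zeta=z$. *)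

theory Defs
  imports "HOL-Analysis.Analysis"
begin

(* Functions of xi are defined on all reals; only xi in (0,oo) matters. *)

definition L1N :: "(real \<Rightarrow> real) \<Rightarrow> (real \<Rightarrow> 'v::real_normed_vector) \<Rightarrow> ennreal" where
  "L1N \<phi> g = (\<integral>\<^sup>+ \<xi> \<in> {0<..}. ennreal (\<bar>\<phi> \<xi>\<bar> * (1 + \<xi>) * norm (g \<xi>)) \<partial>lborel)"

definition inL1 :: "(real \<Rightarrow> real) \<Rightarrow> (real \<Rightarrow> 'v::real_normed_vector) \<Rightarrow> bool" where
  "inL1 \<phi> g \<longleftrightarrow> set_borel_measurable lborel {0<..} g \<and> L1N \<phi> g < \<infinity>"

definition tdelta1 :: "(real \<Rightarrow> real \<Rightarrow> 'v::real_vector) \<Rightarrow> real \<Rightarrow> real \<Rightarrow> real \<Rightarrow> 'v" where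
  "tdelta1 y t s \<xi> = y t \<xi> - exp (- \<xi> * (t - s)) *\<^sub>R y s \<xi>"

definition tdelta2 :: "(real \<Rightarrow> real \<Rightarrow> real \<Rightarrow> 'v::real_vector) \<Rightarrow> real \<Rightarrow> real \<Rightarrow> real \<Rightarrow> real \<Rightarrow> 'v" where
  "tdelta2 B t u s \<xi> = B t s \<xi> - B t u \<xi> - exp (- \<xi> * (t - u)) *\<^sub>R B u s \<xi>"

definition cont2 :: "(real \<Rightarrow> real) \<Rightarrow> real set \<Rightarrow> (real \<Rightarrow> real \<Rightarrow> real \<Rightarrow> 'v::real_normed_vector) \<Rightarrow> bool" where
  "cont2 \<phi> I B \<longleftrightarrow>
     (\<forall>t\<in>I. \<forall>s\<in>I. s \<le> t \<longrightarrow> inL1 \<phi> (B t s)) \<and>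
     (\<forall>t\<in>I. \<forall>s\<in>I. s \<le> t \<longrightarrow> (\<forall>e>0. \<exists>d>0. \<forall>t'\<in>I. \<forall>s'\<in>I. s' \<le> t' \<longrightarrow>
        \<bar>t' - t\<bar> < d \<longrightarrow> \<bar>s' - s\<bar> < d \<longrightarrow> L1N \<phi> (\<lambda>\<xi>. B t' s' \<xi> - B t s \<xi>) < ennreal e))"

definition cont3 :: "(real \<Rightarrow> real) \<Rightarrow> real set \<Rightarrow> (real \<Rightarrow> real \<Rightarrow> real \<Rightarrow> real \<Rightarrow> 'v::real_normed_vector) \<Rightarrow> bool" where
  "cont3 \<phi> I h \<longleftrightarrow>
     (\<forall>t\<in>I. \<forall>u\<in>I. \<forall>s\<in>I. s \<le> u \<longrightarrow> u \<le> t \<longrightarrow> inL1 \<phi> (h t u s)) \<and>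
     (\<forall>t\<in>I. \<forall>u\<in>I. \<forall>s\<in>I. s \<le> u \<longrightarrow> u \<le> t \<longrightarrow> (\<forall>e>0. \<exists>d>0. \<forall>t'\<in>I. \<forall>u'\<in>I. \<forall>s'\<in>I.
        s' \<le> u' \<longrightarrow> u' \<le> t' \<longrightarrow> \<bar>t' - t\<bar> < d \<longrightarrow> \<bar>u' - u\<bar> < d \<longrightarrow> \<bar>s' - s\<bar> < d \<longrightarrow>
        L1N \<phi> (\<lambda>\<xi>. h t' u' s' \<xi> - h t u s \<xi>) < ennreal e))"

definition tN2 :: "(real \<Rightarrow> real) \<Rightarrow> real set \<Rightarrow> real \<Rightarrow> (real \<Rightarrow> real \<Rightarrow> real \<Rightarrow> 'v::real_normed_vector) \<Rightarrow> ennreal" where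
  "tN2 \<phi> I \<mu> B = (SUP (t, s) \<in> {(t, s). t \<in> I \<and> s \<in> I \<and> s < t}.
      L1N \<phi> (B t s) / ennreal ((t - s) powr \<mu>))"

definition tN3 :: "(real \<Rightarrow> real) \<Rightarrow> real set \<Rightarrow> real \<Rightarrow> (real \<Rightarrow> real \<Rightarrow> real \<Rightarrow> real \<Rightarrow> 'v::real_normed_vector) \<Rightarrow> ennreal" where
  "tN3 \<phi> I \<mu> h = (INF (k, hs, \<rho>) \<in> {(k, hs, \<rho>). (\<forall>i<k. 0 < \<rho> i \<and> \<rho> i < \<mu> \<and> cont3 \<phi> I (hs i)) \<and>
        (\<forall>t\<in>I. \<forall>u\<in>I. \<forall>s\<in>I. s \<le> u \<longrightarrow> u \<le> t \<longrightarrow> (\<forall>\<xi>>0. h t u s \<xi> = (\<Sum>i<k. hs i t u s \<xi>)))}.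
      (\<Sum>i<(k::nat). SUP (t, u, s) \<in> {(t, u, s). t \<in> I \<and> u \<in> I \<and> s \<in> I \<and> s < u \<and> u < t}.
          L1N \<phi> ((hs::nat \<Rightarrow> real \<Rightarrow> real \<Rightarrow> real \<Rightarrow> real \<Rightarrow> 'v) i t u s) /
            ennreal ((t - u) powr \<rho> i * (u - s) powr (\<mu> - \<rho> i))))"

definition tC2 :: "(real \<Rightarrow> real) \<Rightarrow> real set \<Rightarrow> real \<Rightarrow> (real \<Rightarrow> real \<Rightarrow> real \<Rightarrow> 'v::real_normed_vector) \<Rightarrow> bool" where
  "tC2 \<phi> I \<mu> B \<longleftrightarrow> cont2 \<phi> I B \<and> tN2 \<phi> I \<mu> B < \<infinity>"

definition tC3 :: "(real \<Rightarrow> real) \<Rightarrow> real set \<Rightarrow> real \<Rightarrow> (real \<Rightarrow> real \<Rightarrow> real \<Rightarrow> real \<Rightarrow> 'v::real_normed_vector) \<Rightarrow> bool" where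
  "tC3 \<phi> I \<mu> h \<longleftrightarrow> cont3 \<phi> I h \<and> tN3 \<phi> I \<mu> h < \<infinity>"

definition pN0 :: "real set \<Rightarrow> (real \<Rightarrow> 'v::real_normed_vector) \<Rightarrow> ennreal" where
  "pN0 I z = (SUP s \<in> I. ennreal (norm (z s)))"

definition pNhol :: "real set \<Rightarrow> real \<Rightarrow> (real \<Rightarrow> 'v::real_normed_vector) \<Rightarrow> ennreal" where
  "pNhol I \<mu> z = (SUP (t, s) \<in> {(t, s). t \<in> I \<and> s \<in> I \<and> s < t}.
      ennreal (norm (z t - z s) / (t - s) powr \<mu>))"

definition pN2 :: "real set \<Rightarrow> real \<Rightarrow> (real \<Rightarrow> real \<Rightarrow> 'v::real_normed_vector) \<Rightarrow> ennreal" where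
  "pN2 I \<mu> r = (SUP (t, s) \<in> {(t, s). t \<in> I \<and> s \<in> I \<and> s < t}.
      ennreal (norm (r t s) / (t - s) powr \<mu>))"

definition x1_of :: "(real \<Rightarrow> real) \<Rightarrow> (real \<Rightarrow> real \<Rightarrow> real \<Rightarrow> real^'n) \<Rightarrow> real \<Rightarrow> real \<Rightarrow> real^'n" where
  "x1_of \<phi> X1 t s = (LINT \<xi>:{0<..}|lborel. \<phi> \<xi> *\<^sub>R X1 t s \<xi>)"

definition outerp :: "real^'n \<Rightarrow> real^'n \<Rightarrow> real^'n^'n" where
  "outerp u v = (\<chi> i j. u $ i * v $ j)"

definition mdot :: "real^'n^'n \<Rightarrow> real^'n^'n \<Rightarrow> real" where
  "mdot A B = (\<Sum>i\<in>UNIV. \<Sum>j\<in>UNIV. A $ i $ j * B $ i $ j)"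

definition hypH :: "(real \<Rightarrow> real) \<Rightarrow> real \<Rightarrow> real \<Rightarrow> (real \<Rightarrow> real \<Rightarrow> real \<Rightarrow> real^'n)
     \<Rightarrow> (real \<Rightarrow> real \<Rightarrow> real \<Rightarrow> real^'n^'n) \<Rightarrow> (real \<Rightarrow> real \<Rightarrow> real \<Rightarrow> real \<Rightarrow> real^'n^'n) \<Rightarrow> bool" where
  "hypH \<phi> T \<gamma> X1 X2 X3 \<longleftrightarrow>
     tC2 \<phi> {0..T} \<gamma> X1 \<and> tC2 \<phi> {0..T} (2 * \<gamma>) X2 \<and> tC3 \<phi> {0..T} (3 * \<gamma>) X3 \<and>
     (\<forall>t u s. 0 \<le> s \<longrightarrow> s \<le> u \<longrightarrow> u \<le> t \<longrightarrow> t \<le> T \<longrightarrow> (\<forall>\<xi>>0. tdelta2 X1 t u s \<xi> = 0)) \<and>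
     (\<forall>t u s. 0 \<le> s \<longrightarrow> s \<le> u \<longrightarrow> u \<le> t \<longrightarrow> t \<le> T \<longrightarrow>
        (\<forall>\<xi>>0. tdelta2 X2 t u s \<xi> = outerp (X1 t u \<xi>) (x1_of \<phi> X1 u s) + X3 t u s \<xi>))"

definition inA :: "(real \<Rightarrow> real) \<Rightarrow> (real \<Rightarrow> real \<Rightarrow> real \<Rightarrow> real^'n) \<Rightarrow> real \<Rightarrow> real \<Rightarrow> real \<Rightarrow> real
     \<Rightarrow> (real \<Rightarrow> real \<Rightarrow> real^'n) \<Rightarrow> real^'n \<Rightarrow> (real \<Rightarrow> real^'n) \<Rightarrow> (real \<Rightarrow> real^'n^'n)
     \<Rightarrow> (real \<Rightarrow> real \<Rightarrow> real^'n) \<Rightarrow> bool" where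
  "inA \<phi> X1 a b \<kappa> \<gamma> f h z \<zeta> r \<longleftrightarrow>
     pNhol {a..b} \<gamma> z < \<infinity> \<and> z a = h \<and>
     (\<forall>s t. a \<le> s \<longrightarrow> s \<le> t \<longrightarrow> t \<le> b \<longrightarrow>
        z t - z s - f t s = x1_of \<phi> X1 t s v* \<zeta> s + r t s) \<and>
     pNhol {a..b} \<kappa> \<zeta> < \<infinity> \<and> pN2 {a..b} (2 * \<kappa>) r < \<infinity>"

definition MA :: "real \<Rightarrow> real \<Rightarrow> real \<Rightarrow> (real \<Rightarrow> real^'n) \<Rightarrow> (real \<Rightarrow> real^'n^'n)
     \<Rightarrow> (real \<Rightarrow> real \<Rightarrow> real^'n) \<Rightarrow> ennreal" where
  "MA a b \<kappa> z \<zeta> r = pN0 {a..b} \<zeta> + pNhol {a..b} \<kappa> \<zeta> + pN2 {a..b} (2 * \<kappa>) r + pNhol {a..b} \<kappa> z"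

definition Hterm :: "(real \<Rightarrow> real \<Rightarrow> real \<Rightarrow> real^'n) \<Rightarrow> (real \<Rightarrow> real \<Rightarrow> real \<Rightarrow> real^'n^'n)
     \<Rightarrow> (real \<Rightarrow> real \<Rightarrow> real \<Rightarrow> real \<Rightarrow> real^'n^'n) \<Rightarrow> (real \<Rightarrow> real \<Rightarrow> real^'n)
     \<Rightarrow> (real \<Rightarrow> real^'n^'n) \<Rightarrow> (real \<Rightarrow> real \<Rightarrow> real^'n) \<Rightarrow> real \<Rightarrow> real \<Rightarrow> real \<Rightarrow> real \<Rightarrow> real" where
  "Hterm X1 X2 X3 f \<zeta> r t u s \<xi> =
     X1 t u \<xi> \<bullet> (r u s + f u s) + mdot (X2 t u \<xi>) (transpose (\<zeta> u - \<zeta> s))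
     - mdot (X3 t u s \<xi>) (transpose (\<zeta> s))"

text \<open>B is (a representative of) tilde Lambda h on [a,b]: the element of tilde C_2^mu with
  tilde delta B = h, for some mu > 1 (unique in L_1 by the paper).\<close>
definition isLambda :: "(real \<Rightarrow> real) \<Rightarrow> real \<Rightarrow> real \<Rightarrow> real
     \<Rightarrow> (real \<Rightarrow> real \<Rightarrow> real \<Rightarrow> real \<Rightarrow> real) \<Rightarrow> (real \<Rightarrow> real \<Rightarrow> real \<Rightarrow> real) \<Rightarrow> bool" where
  "isLambda \<phi> a b \<mu> h B \<longleftrightarrow> 1 < \<mu> \<and> tC2 \<phi> {a..b} \<mu> B \<and>
     (\<forall>t u s. a \<le> s \<longrightarrow> s \<le> u \<longrightarrow> u \<le> t \<longrightarrow> t \<le> b \<longrightarrow> (\<forall>\<xi>>0. tdelta2 B t u s \<xi> = h t u s \<xi>))"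

definition Jint :: "(real \<Rightarrow> real \<Rightarrow> real \<Rightarrow> real^'n) \<Rightarrow> (real \<Rightarrow> real \<Rightarrow> real \<Rightarrow> real^'n^'n)
     \<Rightarrow> (real \<Rightarrow> real^'n) \<Rightarrow> (real \<Rightarrow> real^'n^'n) \<Rightarrow> (real \<Rightarrow> real \<Rightarrow> real \<Rightarrow> real)
     \<Rightarrow> real \<Rightarrow> real \<Rightarrow> real \<Rightarrow> real" where
  "Jint X1 X2 z \<zeta> B t s \<xi> = X1 t s \<xi> \<bullet> z s + mdot (X2 t s \<xi>) (transpose (\<zeta> s)) + B t s \<xi>"

text \<open>N[tilde z; tilde Q^kappa(I)] with the decomposition zeta = z.\<close>
definition QN :: "(real \<Rightarrow> real) \<Rightarrow> (real \<Rightarrow> real \<Rightarrow> real \<Rightarrow> real^'n) \<Rightarrow> real set \<Rightarrow> real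
     \<Rightarrow> (real \<Rightarrow> real \<Rightarrow> real) \<Rightarrow> (real \<Rightarrow> real^'n) \<Rightarrow> ennreal" where
  "QN \<phi> X1 I \<kappa> zt z = tN2 \<phi> I \<kappa> (tdelta1 zt) + pN0 I z + pNhol I \<kappa> z +
     tN2 \<phi> I (2 * \<kappa>) (\<lambda>t s \<xi>. tdelta1 zt t s \<xi> - X1 t s \<xi> \<bullet> z s)"

end

theory Submission
  imports Defs
begin


lemma L1N_integrand_meas:
  assumes "set_borel_measurable lborel {0<..} \<phi>" "set_borel_measurable lborel {0<..} g"
  shows "(\<lambda>\<xi>. ennreal (\<bar>\<phi> \<xi>\<bar> * (1 + \<xi>) * norm (g \<xi>)) * indicator {0<..} \<xi>) \<in> borel_measurable lborel"
proof -
  have m1: "(\<lambda>\<xi>. indicator {0<..} \<xi> *\<^sub>R \<phi> \<xi>) \<in> borel_measurable lborel"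
    using assms(1) unfolding set_borel_measurable_def .
  have m2: "(\<lambda>\<xi>. indicator {0<..} \<xi> *\<^sub>R g \<xi>) \<in> borel_measurable lborel"
    using assms(2) unfolding set_borel_measurable_def .
  have eq: "(\<lambda>\<xi>. ennreal (\<bar>\<phi> \<xi>\<bar> * (1 + \<xi>) * norm (g \<xi>)) * indicator {0<..} \<xi>) =
     (\<lambda>\<xi>. ennreal (\<bar>indicator {0<..} \<xi> *\<^sub>R \<phi> \<xi>\<bar> * (1 + \<xi>) * norm (indicator {0<..} \<xi> *\<^sub>R g \<xi>)))"
    by (rule ext) (auto simp: indicator_def)
  show ?thesis unfolding eq using m1 m2 by measurable
qed

lemma L1N_add_le:
  assumes "set_borel_measurable lborel {0<..} \<phi>" "set_borel_measurable lborel {0<..} f"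
    "set_borel_measurable lborel {0<..} g"
  shows "L1N \<phi> (\<lambda>\<xi>. f \<xi> + g \<xi>) \<le> L1N \<phi> f + L1N \<phi> g"
proof -
  have "L1N \<phi> (\<lambda>\<xi>. f \<xi> + g \<xi>) \<le> (\<integral>\<^sup>+ \<xi>. ennreal (\<bar>\<phi> \<xi>\<bar> * (1 + \<xi>) * norm (f \<xi>)) * indicator {0<..} \<xi>
      + ennreal (\<bar>\<phi> \<xi>\<bar> * (1 + \<xi>) * norm (g \<xi>)) * indicator {0<..} \<xi> \<partial>lborel)"
    unfolding L1N_def
  proof (rule nn_integral_mono)
    fix \<xi> show "ennreal (\<bar>\<phi> \<xi>\<bar> * (1 + \<xi>) * norm (f \<xi> + g \<xi>)) * indicator {0<..} \<xi>
      \<le> ennreal (\<bar>\<phi> \<xi>\<bar> * (1 + \<xi>) * norm (f \<xi>)) * indicator {0<..} \<xi> + ennreal (\<bar>\<phi> \<xi>\<bar> * (1 + \<xi>) * norm (g \<xi>)) * indicator {0<..} \<xi>"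
    proof (cases "\<xi> > 0")
      case True
      have "\<bar>\<phi> \<xi>\<bar> * (1 + \<xi>) * norm (f \<xi> + g \<xi>) \<le> \<bar>\<phi> \<xi>\<bar> * (1 + \<xi>) * norm (f \<xi>) + \<bar>\<phi> \<xi>\<bar> * (1 + \<xi>) * norm (g \<xi>)"
        using True norm_triangle_ineq[of "f \<xi>" "g \<xi>"] by (simp add: distrib_left[symmetric] mult_left_mono)
      then show ?thesis using True by (simp add: ennreal_plus[symmetric] del: ennreal_plus)
    qed simp
  qed
  also have "\<dots> = L1N \<phi> f + L1N \<phi> g" unfolding L1N_def
    by (rule nn_integral_add; rule L1N_integrand_meas; fact)
  finally show ?thesis .
qed



lemma mdot_bound: "\<bar>mdot A B\<bar> \<le> real (CARD('n))^2 * (norm A * norm B)" for A B :: "real^'n^'n"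
proof -
  have "\<bar>mdot A B\<bar> \<le> (\<Sum>i\<in>UNIV. \<Sum>j\<in>UNIV. \<bar>A $ i $ j * B $ i $ j\<bar>)"
    unfolding mdot_def by (rule order_trans[OF sum_abs]) (intro sum_mono sum_abs)
  also have "\<dots> \<le> (\<Sum>i\<in>(UNIV::'n set). \<Sum>j\<in>(UNIV::'n set). norm A * norm B)"
  proof (intro sum_mono)
    fix i j
    have "\<bar>A $ i $ j\<bar> \<le> norm A" using component_le_norm_cart[of "A$i" j] Finite_Cartesian_Product.norm_nth_le[of A i] by linarith
    moreover have "\<bar>B $ i $ j\<bar> \<le> norm B" using component_le_norm_cart[of "B$i" j] Finite_Cartesian_Product.norm_nth_le[of B i] by linarith
    ultimately show "\<bar>A $ i $ j * B $ i $ j\<bar> \<le> norm A * norm B"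
      by (simp add: abs_mult mult_mono)
  qed
  also have "\<dots> = real (CARD('n))^2 * (norm A * norm B)" by (simp add: power2_eq_square)
  finally show ?thesis .
qed

lemma vm_bound: "norm (x v* A) \<le> real (CARD('n))^2 * (norm x * norm A)" for x :: "real^'n" and A :: "real^'n^'n"
proof -
  have "norm (x v* A) \<le> (\<Sum>j\<in>UNIV. \<bar>(x v* A) $ j\<bar>)" by (rule norm_le_l1_cart)
  also have "\<dots> \<le> (\<Sum>j\<in>(UNIV::'n set). \<Sum>i\<in>(UNIV::'n set). norm x * norm A)"
  proof (intro sum_mono)
    fix j
    have "\<bar>(x v* A) $ j\<bar> = \<bar>\<Sum>i\<in>UNIV. A $ i $ j * x $ i\<bar>" by (simp add: vector_matrix_mult_def mult.commute)
    also have "\<dots> \<le> (\<Sum>i\<in>UNIV. \<bar>A $ i $ j * x $ i\<bar>)" by (rule sum_abs)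
    also have "\<dots> \<le> (\<Sum>i\<in>(UNIV::'n set). norm x * norm A)"
    proof (intro sum_mono)
      fix i
      have "\<bar>A $ i $ j\<bar> \<le> norm A" using component_le_norm_cart[of "A$i" j] Finite_Cartesian_Product.norm_nth_le[of A i] by linarith
      moreover have "\<bar>x $ i\<bar> \<le> norm x" by (rule component_le_norm_cart)
      ultimately show "\<bar>A $ i $ j * x $ i\<bar> \<le> norm x * norm A"
        by (simp add: abs_mult mult_mono mult.commute)
    qed
    finally show "\<bar>(x v* A) $ j\<bar> \<le> (\<Sum>i\<in>(UNIV::'n set). norm x * norm A)" .
  qed
  also have "\<dots> = real (CARD('n))^2 * (norm x * norm A)" by (simp add: power2_eq_square)
  finally show ?thesis .
qed

lemma sew_real:
  fixes M :: "real \<Rightarrow> real \<Rightarrow> real"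
  assumes mu: "1 < \<mu>" and th: "1 < \<theta>" and K: "0 \<le> K" and N: "0 \<le> N"
    and Mmu: "\<And>s t. a \<le> s \<Longrightarrow> s < t \<Longrightarrow> t \<le> b \<Longrightarrow> M t s \<le> N * (t - s) powr \<mu>"
    and Msplit: "\<And>s t. a \<le> s \<Longrightarrow> s < t \<Longrightarrow> t \<le> b \<Longrightarrow>
        M t s \<le> M t ((s + t) / 2) + M ((s + t) / 2) s + K * (t - s) powr \<theta>"
    and st: "a \<le> s" "s < t" "t \<le> b"
  shows "M t s \<le> K / (1 - 2 powr (1 - \<theta>)) * (t - s) powr \<theta>"
proof -
  define q where "q = 2 powr (1 - \<theta>)"
  have q0: "0 < q" "q < 1" unfolding q_def using th
    by (auto intro!: powr_less_one)
  have claim: "\<And>s t. a \<le> s \<Longrightarrow> s < t \<Longrightarrow> t \<le> b \<Longrightarrow>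
      M t s \<le> 2 ^ n * N * ((t - s) / 2 ^ n) powr \<mu> + K * (t - s) powr \<theta> * (\<Sum>k<n. q ^ k)" for n
  proof (induction n)
    case 0 then show ?case using Mmu by simp
  next
    case (Suc n)
    define u where "u = (s + t) / 2"
    have u: "s < u" "u < t" "t - u = (t - s) / 2" "u - s = (t - s) / 2" using Suc.prems unfolding u_def by (auto simp: field_simps)
    have h1: "M t u \<le> 2 ^ n * N * (((t - s) / 2) / 2 ^ n) powr \<mu> + K * ((t - s) / 2) powr \<theta> * (\<Sum>k<n. q ^ k)"
      using Suc.IH[of u t] Suc.prems u by simp
    have h2: "M u s \<le> 2 ^ n * N * (((t - s) / 2) / 2 ^ n) powr \<mu> + K * ((t - s) / 2) powr \<theta> * (\<Sum>k<n. q ^ k)"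
      using Suc.IH[of s u] Suc.prems u by simp
    have e1: "((t - s) / 2) powr \<theta> = (t - s) powr \<theta> * (q / 2)"
    proof -
      have "((t - s) / 2) powr \<theta> = (t - s) powr \<theta> / 2 powr \<theta>"
        using Suc.prems by (simp add: powr_divide)
      moreover have "q / 2 = 1 / 2 powr \<theta>" unfolding q_def by (simp add: powr_diff)
      ultimately show ?thesis by simp
    qed
    have e2: "((t - s) / 2) / 2 ^ n = (t - s) / 2 ^ Suc n" by simp
    have "M t s \<le> M t u + M u s + K * (t - s) powr \<theta>" using Msplit[OF Suc.prems] unfolding u_def .
    also have "\<dots> \<le> 2 * (2 ^ n * N * ((t - s) / 2 ^ Suc n) powr \<mu>)
          + K * (t - s) powr \<theta> * (1 + q * (\<Sum>k<n. q ^ k))"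
      using h1 h2 unfolding e1 e2 by (simp add: algebra_simps)
    also have "1 + q * (\<Sum>k<n. q ^ k) = (\<Sum>k<Suc n. q ^ k)"
      by (subst sum.lessThan_Suc_shift) (simp add: sum_distrib_left)
    finally show ?case by simp
  qed
  define S where "S = 1 / (1 - q)"
  have sumle: "(\<Sum>k<n. q ^ k) \<le> S" for n
  proof -
    have "(\<Sum>k<n. q ^ k) \<le> (\<Sum>k. q ^ k)"
      using q0 by (intro sum_le_suminf summable_geometric) auto
    also have "\<dots> = S" unfolding S_def using q0 by (simp add: suminf_geometric)
    finally show ?thesis .
  qed
  define A where "A n = 2 ^ n * N * ((t - s) / 2 ^ n) powr \<mu>" for n
  have Aeq: "A n = N * (t - s) powr \<mu> * (2 powr (1 - \<mu>)) ^ n" for n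
  proof -
    define P where "P = (2 powr real n) powr \<mu>"
    have P: "P > 0" unfolding P_def by simp
    have e1: "((t - s) / 2 ^ n) powr \<mu> = (t - s) powr \<mu> / P"
      using st by (simp add: powr_divide P_def powr_realpow)
    have e2: "(2 powr (1 - \<mu>)) ^ n = 2 ^ n / P"
    proof -
      have "(2 powr (1 - \<mu>)) ^ n = (2 powr (1 - \<mu>)) powr (real n)" by (simp add: powr_realpow)
      also have "\<dots> = 2 powr (real n - real n * \<mu>)" by (simp add: powr_powr algebra_simps)
      also have "\<dots> = 2 powr n / (2 powr n) powr \<mu>" by (simp add: powr_diff powr_powr)
      finally show ?thesis unfolding P_def by (simp add: powr_realpow)
    qed
    show ?thesis unfolding A_def e1 e2 by simp
  qed
  have "A \<longlonglongrightarrow> N * (t - s) powr \<mu> * 0"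
    unfolding Aeq using mu by (intro tendsto_mult_left LIMSEQ_power_zero) (auto intro!: powr_less_one)
  hence Alim: "A \<longlonglongrightarrow> 0" by simp
  have "\<And>n. M t s \<le> A n + K * (t - s) powr \<theta> * S"
    using claim[OF st] sumle K unfolding A_def
    by (meson add_left_mono mult_left_mono order_trans powr_ge_zero zero_le_mult_iff)
  hence "M t s \<le> 0 + K * (t - s) powr \<theta> * S"
    by (intro LIMSEQ_le_const[OF tendsto_add[OF Alim tendsto_const]]) auto
  then show ?thesis unfolding S_def q_def by simp
qed



lemma sbm_norm: "set_borel_measurable lborel {0<..} g \<Longrightarrow> set_borel_measurable lborel {0<..} (\<lambda>\<xi>. norm (g \<xi>))"
  for g :: "real \<Rightarrow> 'a::{real_normed_vector, second_countable_topology}"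
  unfolding set_borel_measurable_def
proof -
  assume m: "(\<lambda>x. indicator {0<..} x *\<^sub>R g x) \<in> borel_measurable lborel"
  have eq: "(\<lambda>x. indicator {0<..} x *\<^sub>R norm (g x)) = (\<lambda>x. norm (indicator {0<..} x *\<^sub>R g x))"
    by (rule ext) (simp add: indicator_def)
  show "(\<lambda>x. indicator {0<..} x *\<^sub>R norm (g x)) \<in> borel_measurable lborel" unfolding eq using m by measurable
qed

lemma L1N_norm: "L1N \<phi> (\<lambda>\<xi>. norm (g \<xi>)) = L1N \<phi> g"
  unfolding L1N_def by simp

lemma L1N_cmult:
  assumes "set_borel_measurable lborel {0<..} \<phi>" "set_borel_measurable lborel {0<..} g" "0 \<le> c"
  shows "L1N \<phi> (\<lambda>\<xi>. c * g \<xi>) = ennreal c * L1N \<phi> g"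
proof -
  have "L1N \<phi> (\<lambda>\<xi>. c * g \<xi>) = (\<integral>\<^sup>+ \<xi>. ennreal c * (ennreal (\<bar>\<phi> \<xi>\<bar> * (1 + \<xi>) * norm (g \<xi>)) * indicator {0<..} \<xi>) \<partial>lborel)"
    unfolding L1N_def
  proof (rule nn_integral_cong)
    fix \<xi> show "ennreal (\<bar>\<phi> \<xi>\<bar> * (1 + \<xi>) * norm (c * g \<xi>)) * indicator {0<..} \<xi> =
       ennreal c * (ennreal (\<bar>\<phi> \<xi>\<bar> * (1 + \<xi>) * norm (g \<xi>)) * indicator {0<..} \<xi>)"
      using assms(3) by (cases "\<xi> > 0") (auto simp: ennreal_mult'' abs_mult mult_ac indicator_def)
  qed
  also have "\<dots> = ennreal c * L1N \<phi> g" unfolding L1N_def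
    by (rule nn_integral_cmult) (rule L1N_integrand_meas; fact)
  finally show ?thesis .
qed

lemma L1N_mono_pt:
  assumes "\<And>\<xi>. \<xi> > 0 \<Longrightarrow> norm (f \<xi>) \<le> norm (g \<xi>)"
  shows "L1N \<phi> f \<le> L1N \<phi> g"
  unfolding L1N_def
proof (rule nn_integral_mono)
  fix \<xi> show "ennreal (\<bar>\<phi> \<xi>\<bar> * (1 + \<xi>) * norm (f \<xi>)) * indicator {0<..} \<xi>
       \<le> ennreal (\<bar>\<phi> \<xi>\<bar> * (1 + \<xi>) * norm (g \<xi>)) * indicator {0<..} \<xi>"
  proof (cases "\<xi> > 0")
    case True
    then have "\<bar>\<phi> \<xi>\<bar> * (1 + \<xi>) * norm (f \<xi>) \<le> \<bar>\<phi> \<xi>\<bar> * (1 + \<xi>) * norm (g \<xi>)"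
      using assms[OF True] by (intro mult_left_mono) auto
    then show ?thesis by (intro mult_right_mono ennreal_leI) auto
  qed simp
qed

definition Gsum :: "(real \<times> (real \<Rightarrow> real) \<times> real) list \<Rightarrow> real \<Rightarrow> real" where
  "Gsum L \<xi> = sum_list (map (\<lambda>(c, g, b). c * \<bar>g \<xi>\<bar>) L)"

definition Bsum :: "(real \<times> (real \<Rightarrow> real) \<times> real) list \<Rightarrow> real" where
  "Bsum L = sum_list (map (\<lambda>(c, g, b). c * b) L)"

definition okL :: "(real \<Rightarrow> real) \<Rightarrow> (real \<times> (real \<Rightarrow> real) \<times> real) list \<Rightarrow> bool" where
  "okL \<phi> L = list_all (\<lambda>(c, g, b). set_borel_measurable lborel {0<..} g \<and> 0 \<le> c \<and> 0 \<le> b \<and> L1N \<phi> g \<le> ennreal b) L"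

lemma Gsum_props:
  assumes \<phi>m: "set_borel_measurable lborel {0<..} \<phi>" and ok: "okL \<phi> L"
  shows "set_borel_measurable lborel {0<..} (Gsum L) \<and> L1N \<phi> (Gsum L) \<le> ennreal (Bsum L)
    \<and> 0 \<le> Bsum L \<and> (\<forall>\<xi>. 0 \<le> Gsum L \<xi>)"
  using ok
proof (induction L)
  case Nil
  have "L1N \<phi> (\<lambda>\<xi>. 0::real) = 0" unfolding L1N_def by simp
  then show ?case by (simp add: Gsum_def Bsum_def set_borel_measurable_def)
next
  case (Cons x L)
  obtain c g b where x: "x = (c, g, b)" by (cases x) auto
  have gm: "set_borel_measurable lborel {0<..} g" and c: "0 \<le> c" and b: "0 \<le> b" and gb: "L1N \<phi> g \<le> ennreal b"
    and okL: "okL \<phi> L" using Cons.prems unfolding okL_def x by auto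
  note IH = Cons.IH[OF okL]
  have G: "Gsum (x # L) = (\<lambda>\<xi>. c * \<bar>g \<xi>\<bar> + Gsum L \<xi>)" unfolding x Gsum_def by auto
  have B: "Bsum (x # L) = c * b + Bsum L" unfolding x Bsum_def by auto
  have gam: "set_borel_measurable lborel {0<..} (\<lambda>\<xi>. \<bar>g \<xi>\<bar>)" using sbm_norm[OF gm] by simp
  have cgm: "set_borel_measurable lborel {0<..} (\<lambda>\<xi>. c * \<bar>g \<xi>\<bar>)"
  proof -
    have eq: "(\<lambda>x. indicator {0<..} x *\<^sub>R (c * \<bar>g x\<bar>)) = (\<lambda>x. c * (indicator {0<..} x *\<^sub>R \<bar>g x\<bar>))"
      by (rule ext) simp
    show ?thesis using gam unfolding set_borel_measurable_def eq by measurable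
  qed
  have meas: "set_borel_measurable lborel {0<..} (Gsum (x # L))"
  proof -
    have eq: "(\<lambda>x. indicator {0<..} x *\<^sub>R (c * \<bar>g x\<bar> + Gsum L x)) =
      (\<lambda>x. indicator {0<..} x *\<^sub>R (c * \<bar>g x\<bar>) + indicator {0<..} x *\<^sub>R Gsum L x)"
      by (rule ext) (simp add: algebra_simps)
    have m1: "(\<lambda>x. indicator {0<..} x *\<^sub>R (c * \<bar>g x\<bar>)) \<in> borel_measurable lborel"
      using cgm unfolding set_borel_measurable_def .
    have m2: "(\<lambda>x. indicator {0<..} x *\<^sub>R Gsum L x) \<in> borel_measurable lborel"
      using IH unfolding set_borel_measurable_def by auto
    show ?thesis unfolding G set_borel_measurable_def eq using m1 m2 by (rule borel_measurable_add)
  qed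
  have "L1N \<phi> (Gsum (x # L)) \<le> L1N \<phi> (\<lambda>\<xi>. c * \<bar>g \<xi>\<bar>) + L1N \<phi> (Gsum L)"
    unfolding G by (rule L1N_add_le[OF \<phi>m cgm]) (use IH in auto)
  also have "L1N \<phi> (\<lambda>\<xi>. c * \<bar>g \<xi>\<bar>) = ennreal c * L1N \<phi> g"
    using L1N_cmult[OF \<phi>m gam c] L1N_norm[of \<phi> g] by simp
  also have "ennreal c * L1N \<phi> g + L1N \<phi> (Gsum L) \<le> ennreal c * ennreal b + ennreal (Bsum L)"
    using gb IH by (intro add_mono mult_left_mono) auto
  also have "\<dots> = ennreal (Bsum (x # L))" unfolding B using c b IH by (simp add: ennreal_mult ennreal_plus)
  finally show ?case using meas B c b IH unfolding G by auto
qed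

lemma L1N_dom:
  assumes \<phi>m: "set_borel_measurable lborel {0<..} \<phi>" and ok: "okL \<phi> L"
    and dom: "\<And>\<xi>. \<xi> > 0 \<Longrightarrow> norm (f \<xi>) \<le> Gsum L \<xi>"
  shows "L1N \<phi> f \<le> ennreal (Bsum L)"
proof -
  note P = Gsum_props[OF \<phi>m ok]
  have "L1N \<phi> f \<le> L1N \<phi> (Gsum L)"
    by (rule L1N_mono_pt) (use dom P in auto)
  also have "\<dots> \<le> ennreal (Bsum L)" using P by auto
  finally show ?thesis .
qed



lemma ediv_le: "0 < p \<Longrightarrow> x / ennreal p \<le> y \<Longrightarrow> x \<le> y * ennreal p"
proof -
  assume p: "0 < p" and h: "x / ennreal p \<le> y"
  have "x = (x / ennreal p) * ennreal p"
    using p by (simp add: ennreal_divide_times ennreal_divide_self)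
  also have "\<dots> \<le> y * ennreal p" using h by (rule mult_right_mono) simp
  finally show ?thesis .
qed

lemma ediv_leI: "0 < p \<Longrightarrow> x \<le> ennreal (y * p) \<Longrightarrow> 0 \<le> y \<Longrightarrow> x / ennreal p \<le> ennreal y"
  by (rule divide_le_posI_ennreal) (auto simp: ennreal_mult mult.commute)

lemma tN2_bound:
  assumes "tN2 \<phi> I \<mu> X < \<infinity>" "t \<in> I" "s \<in> I" "s < t"
  shows "L1N \<phi> (X t s) \<le> ennreal (enn2real (tN2 \<phi> I \<mu> X) * (t - s) powr \<mu>)"
proof -
  have "L1N \<phi> (X t s) / ennreal ((t - s) powr \<mu>) \<le> tN2 \<phi> I \<mu> X"
    unfolding tN2_def using assms(2-4) by (intro SUP_upper2[where i="(t, s)"]) auto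
  also have "\<dots> = ennreal (enn2real (tN2 \<phi> I \<mu> X))" using assms(1) by simp
  finally have "L1N \<phi> (X t s) \<le> ennreal (enn2real (tN2 \<phi> I \<mu> X)) * ennreal ((t - s) powr \<mu>)"
    using assms(4) by (intro ediv_le) auto
  then show ?thesis by (simp add: ennreal_mult)
qed

lemma tN2_le:
  assumes "\<And>t s. t \<in> I \<Longrightarrow> s \<in> I \<Longrightarrow> s < t \<Longrightarrow> L1N \<phi> (X t s) \<le> ennreal (V * (t - s) powr \<mu>)" "0 \<le> V"
  shows "tN2 \<phi> I \<mu> X \<le> ennreal V"
  unfolding tN2_def using assms by (intro SUP_least) (auto intro!: ediv_leI)

lemma pNhol_bound:
  assumes "pNhol I \<mu> z < \<infinity>" "t \<in> I" "s \<in> I" "s < t"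
  shows "norm (z t - z s) \<le> enn2real (pNhol I \<mu> z) * (t - s) powr \<mu>"
proof -
  have "ennreal (norm (z t - z s) / (t - s) powr \<mu>) \<le> pNhol I \<mu> z"
    unfolding pNhol_def using assms(2-4) by (intro SUP_upper2[where i="(t, s)"]) auto
  also have "\<dots> = ennreal (enn2real (pNhol I \<mu> z))" using assms(1) by simp
  finally have "norm (z t - z s) / (t - s) powr \<mu> \<le> enn2real (pNhol I \<mu> z)"
    by (subst (asm) ennreal_le_iff) auto
  then show ?thesis using assms(4) by (simp add: divide_le_eq)
qed

lemma pN2_bound:
  assumes "pN2 I \<mu> r < \<infinity>" "t \<in> I" "s \<in> I" "s < t"
  shows "norm (r t s) \<le> enn2real (pN2 I \<mu> r) * (t - s) powr \<mu>"
proof -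
  have "ennreal (norm (r t s) / (t - s) powr \<mu>) \<le> pN2 I \<mu> r"
    unfolding pN2_def using assms(2-4) by (intro SUP_upper2[where i="(t, s)"]) auto
  also have "\<dots> = ennreal (enn2real (pN2 I \<mu> r))" using assms(1) by simp
  finally have "norm (r t s) / (t - s) powr \<mu> \<le> enn2real (pN2 I \<mu> r)"
    by (subst (asm) ennreal_le_iff) auto
  then show ?thesis using assms(4) by (simp add: divide_le_eq)
qed

lemma pN0_bound:
  assumes "pN0 I z < \<infinity>" "s \<in> I"
  shows "norm (z s) \<le> enn2real (pN0 I z)"
proof -
  have "ennreal (norm (z s)) \<le> pN0 I z"
    unfolding pN0_def using assms(2) by (intro SUP_upper) auto
  also have "\<dots> = ennreal (enn2real (pN0 I z))" using assms(1) by simp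
  finally show ?thesis by (subst (asm) ennreal_le_iff) auto
qed

lemma pNhol_le:
  assumes "\<And>t s. t \<in> I \<Longrightarrow> s \<in> I \<Longrightarrow> s < t \<Longrightarrow> norm (z t - z s) \<le> V * (t - s) powr \<mu>" "0 \<le> V"
  shows "pNhol I \<mu> z \<le> ennreal V"
  unfolding pNhol_def
proof (intro SUP_least, clarify)
  fix t s assume "t \<in> I" "s \<in> I" "s < t"
  then have "norm (z t - z s) / (t - s) powr \<mu> \<le> V" using assms by (simp add: divide_le_eq)
  then show "ennreal (norm (z t - z s) / (t - s) powr \<mu>) \<le> ennreal V" by (rule ennreal_leI)
qed

lemma mdotT_bound: "\<bar>mdot A (transpose B)\<bar> \<le> real (CARD('n))^2 * (norm A * norm B)" for A B :: "real^'n^'n"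
proof -
  have "\<bar>mdot A (transpose B)\<bar> \<le> (\<Sum>i\<in>UNIV. \<Sum>j\<in>UNIV. \<bar>A $ i $ j * B $ j $ i\<bar>)"
    unfolding mdot_def transpose_def by (rule order_trans[OF sum_abs]) (auto intro!: sum_mono sum_abs)
  also have "\<dots> \<le> (\<Sum>i\<in>(UNIV::'n set). \<Sum>j\<in>(UNIV::'n set). norm A * norm B)"
  proof (intro sum_mono)
    fix i j
    have "\<bar>A $ i $ j\<bar> \<le> norm A" using component_le_norm_cart[of "A$i" j] Finite_Cartesian_Product.norm_nth_le[of A i] by linarith
    moreover have "\<bar>B $ j $ i\<bar> \<le> norm B" using component_le_norm_cart[of "B$j" i] Finite_Cartesian_Product.norm_nth_le[of B j] by linarith
    ultimately show "\<bar>A $ i $ j * B $ j $ i\<bar> \<le> norm A * norm B"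
      by (simp add: abs_mult mult_mono)
  qed
  also have "\<dots> = real (CARD('n))^2 * (norm A * norm B)" by (simp add: power2_eq_square)
  finally show ?thesis .
qed

lemma pw2:
  fixes \<delta> \<epsilon> T a b q :: real
  assumes "0 < \<delta>" "\<delta> \<le> \<epsilon>" "\<epsilon> \<le> T" "0 \<le> a" "0 \<le> b" "0 \<le> q" "q \<le> a + b" "a + b - q \<le> 1"
  shows "\<epsilon> powr a * \<delta> powr b \<le> \<epsilon> powr q * max 1 T"
proof -
  have "\<epsilon> powr a * \<delta> powr b \<le> \<epsilon> powr a * \<epsilon> powr b"
    using assms by (intro mult_left_mono powr_mono2) auto
  also have "\<dots> = \<epsilon> powr q * \<epsilon> powr (a + b - q)" by (simp add: powr_add[symmetric])
  also have "\<epsilon> powr (a + b - q) \<le> T powr (a + b - q)" using assms by (intro powr_mono2) auto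
  also have "T powr (a + b - q) \<le> max 1 T"
  proof (cases "T \<ge> 1")
    case True
    then have "T powr (a + b - q) \<le> T powr 1" using assms by (intro powr_mono) auto
    then show ?thesis using True by simp
  next
    case False
    have T0: "0 < T" using assms by linarith
    have "T powr (a + b - q) \<le> T powr 0" using False assms T0 by (intro powr_mono') auto
    then have "T powr (a + b - q) \<le> 1" using T0 by simp
    then show ?thesis by simp
  qed
  finally show ?thesis by (simp add: mult_left_mono)
qed

lemma x1_bound:
  fixes X :: "real \<Rightarrow> real \<Rightarrow> real \<Rightarrow> real^'n"
  assumes \<phi>m: "set_borel_measurable lborel {0<..} \<phi>" and Xm: "set_borel_measurable lborel {0<..} (X t s)"
    and b: "L1N \<phi> (X t s) \<le> ennreal V" and V: "0 \<le> V"
  shows "norm (x1_of \<phi> X t s) \<le> V"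
proof -
  let ?g = "\<lambda>\<xi>. indicator {0<..} \<xi> *\<^sub>R (\<phi> \<xi> *\<^sub>R X t s \<xi>)"
  have m1: "(\<lambda>\<xi>. indicator {0<..} \<xi> *\<^sub>R \<phi> \<xi>) \<in> borel_measurable lborel"
    using \<phi>m unfolding set_borel_measurable_def .
  have m2: "(\<lambda>\<xi>. indicator {0<..} \<xi> *\<^sub>R X t s \<xi>) \<in> borel_measurable lborel"
    using Xm unfolding set_borel_measurable_def .
  have eqg: "(\<lambda>\<xi>. norm (?g \<xi>)) = (\<lambda>\<xi>. norm ((indicator {0<..} \<xi> *\<^sub>R \<phi> \<xi>) *\<^sub>R (indicator {0<..} \<xi> *\<^sub>R X t s \<xi>)))"
    by (rule ext) (simp add: indicator_def)
  have gm: "(\<lambda>\<xi>. norm (?g \<xi>)) \<in> borel_measurable lborel" unfolding eqg using m1 m2 by measurable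
  have "norm (x1_of \<phi> X t s) \<le> (\<integral>\<xi>. norm (?g \<xi>) \<partial>lborel)"
    unfolding x1_of_def set_lebesgue_integral_def by (rule integral_norm_bound)
  also have "\<dots> = enn2real (\<integral>\<^sup>+ \<xi>. ennreal (norm (?g \<xi>)) \<partial>lborel)"
    by (rule integral_eq_nn_integral) (use gm in auto)
  also have "\<dots> \<le> enn2real (ennreal V)"
  proof (rule enn2real_mono)
    have "(\<integral>\<^sup>+ \<xi>. ennreal (norm (?g \<xi>)) \<partial>lborel) \<le> L1N \<phi> (X t s)"
      unfolding L1N_def
    proof (rule nn_integral_mono)
      fix \<xi> show "ennreal (norm (?g \<xi>)) \<le> ennreal (\<bar>\<phi> \<xi>\<bar> * (1 + \<xi>) * norm (X t s \<xi>)) * indicator {0<..} \<xi>"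
      proof (cases "\<xi> > 0")
        case True
        have "\<bar>\<phi> \<xi>\<bar> * norm (X t s \<xi>) \<le> \<bar>\<phi> \<xi>\<bar> * (1 + \<xi>) * norm (X t s \<xi>)"
        proof -
          have "norm (X t s \<xi>) \<le> (1 + \<xi>) * norm (X t s \<xi>)" using True by (simp add: algebra_simps)
          then show ?thesis by (simp add: mult_left_mono mult.assoc)
        qed
        then show ?thesis using True by (auto intro: ennreal_leI)
      qed simp
    qed
    also have "\<dots> \<le> ennreal V" by (rule b)
    finally show "(\<integral>\<^sup>+ \<xi>. ennreal (norm (?g \<xi>)) \<partial>lborel) \<le> ennreal V" .
  qed simp
  also have "\<dots> \<le> V" using V by simp
  finally show ?thesis .
qed



lemma Gsum_map: "Gsum (map F xs) \<xi> = sum_list (map (\<lambda>i. case F i of (c, g, b) \<Rightarrow> c * \<bar>g \<xi>\<bar>) xs)"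
  unfolding Gsum_def by (simp add: comp_def)

lemma Bsum_map: "Bsum (map F xs) = sum_list (map (\<lambda>i. case F i of (c, g, b) \<Rightarrow> c * b) xs)"
  unfolding Bsum_def by (simp add: comp_def)

lemma X3_const:
  fixes X3 :: "real \<Rightarrow> real \<Rightarrow> real \<Rightarrow> real \<Rightarrow> 'v::{real_normed_vector, second_countable_topology}"
  assumes \<phi>m: "set_borel_measurable lborel {0<..} \<phi>" and tc: "tC3 \<phi> I \<mu> X3" and \<mu>: "0 < \<mu>"
  shows "\<exists>C\<ge>0. \<forall>t u s. t \<in> I \<longrightarrow> u \<in> I \<longrightarrow> s \<in> I \<longrightarrow> s < u \<longrightarrow> u < t \<longrightarrow>
     L1N \<phi> (X3 t u s) \<le> ennreal (C * (t - s) powr \<mu>)"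
proof -
  have "tN3 \<phi> I \<mu> X3 < \<infinity>" using tc unfolding tC3_def by auto
  then obtain k hs \<rho> where mem: "(\<forall>i<k. 0 < \<rho> i \<and> \<rho> i < \<mu> \<and> cont3 \<phi> I (hs i)) \<and>
        (\<forall>t\<in>I. \<forall>u\<in>I. \<forall>s\<in>I. s \<le> u \<longrightarrow> u \<le> t \<longrightarrow> (\<forall>\<xi>>0. X3 t u s \<xi> = (\<Sum>i<k. hs i t u s \<xi>)))"
    and fin: "(\<Sum>i<(k::nat). SUP (t, u, s) \<in> {(t, u, s). t \<in> I \<and> u \<in> I \<and> s \<in> I \<and> s < u \<and> u < t}.
          L1N \<phi> ((hs::nat \<Rightarrow> real \<Rightarrow> real \<Rightarrow> real \<Rightarrow> real \<Rightarrow> 'v) i t u s) /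
            ennreal ((t - u) powr \<rho> i * (u - s) powr (\<mu> - \<rho> i))) < \<infinity>"
    unfolding tN3_def INF_less_iff by auto
  define S where "S i = (SUP (t, u, s) \<in> {(t, u, s). t \<in> I \<and> u \<in> I \<and> s \<in> I \<and> s < u \<and> u < t}.
          L1N \<phi> (hs i t u s) / ennreal ((t - u) powr \<rho> i * (u - s) powr (\<mu> - \<rho> i)))" for i
  have Sfin: "S i < \<infinity>" if "i < k" for i
    using fin that unfolding S_def[symmetric] using ennreal_sum_eq_top[of "{..<k}" S] by (auto simp: top.not_eq_extremum)
  define C where "C = (\<Sum>i<k. enn2real (S i))"
  show ?thesis
  proof (intro exI[of _ C] conjI allI impI)
    show "0 \<le> C" unfolding C_def by (simp add: sum_nonneg)
    fix t u s assume tus: "t \<in> I" "u \<in> I" "s \<in> I" "s < u" "u < t"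
    have bnd: "L1N \<phi> (hs i t u s) \<le> ennreal (enn2real (S i) * (t - s) powr \<mu>)" if i: "i < k" for i
    proof -
      have "L1N \<phi> (hs i t u s) / ennreal ((t - u) powr \<rho> i * (u - s) powr (\<mu> - \<rho> i)) \<le> S i"
        unfolding S_def using tus by (intro SUP_upper2[where i="(t, u, s)"]) auto
      also have "\<dots> = ennreal (enn2real (S i))" using Sfin[OF i] by simp
      finally have "L1N \<phi> (hs i t u s) \<le> ennreal (enn2real (S i)) * ennreal ((t - u) powr \<rho> i * (u - s) powr (\<mu> - \<rho> i))"
        using tus by (intro ediv_le) auto
      also have "\<dots> \<le> ennreal (enn2real (S i)) * ennreal ((t - s) powr \<rho> i * (t - s) powr (\<mu> - \<rho> i))"
        using tus mem i by (intro mult_left_mono ennreal_leI mult_mono powr_mono2) auto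
      also have "(t - s) powr \<rho> i * (t - s) powr (\<mu> - \<rho> i) = (t - s) powr \<mu>"
        by (simp add: powr_add[symmetric])
      finally show ?thesis by (simp add: ennreal_mult)
    qed
    define L where "L = map (\<lambda>i. (1::real, \<lambda>\<xi>. norm (hs i t u s \<xi>), enn2real (S i) * (t - s) powr \<mu>)) [0..<k]"
    have ok: "okL \<phi> L" unfolding okL_def L_def list_all_iff
    proof (clarsimp)
      fix i assume i: "i < k"
      have "inL1 \<phi> (hs i t u s)" using mem i tus unfolding cont3_def by auto
      then have "set_borel_measurable lborel {0<..} (hs i t u s)" unfolding inL1_def by auto
      then show "set_borel_measurable lborel {0<..} (\<lambda>\<xi>. norm (hs i t u s \<xi>)) \<and> L1N \<phi> (\<lambda>\<xi>. norm (hs i t u s \<xi>)) \<le> ennreal (enn2real (S i) * (t - s) powr \<mu>)"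
        using bnd[OF i] by (simp add: sbm_norm L1N_norm)
    qed
    have "L1N \<phi> (X3 t u s) \<le> ennreal (Bsum L)"
    proof (rule L1N_dom[OF \<phi>m ok])
      fix \<xi> :: real assume "\<xi> > 0"
      then have "X3 t u s \<xi> = (\<Sum>i<k. hs i t u s \<xi>)" using mem tus by auto
      then have "norm (X3 t u s \<xi>) \<le> (\<Sum>i<k. norm (hs i t u s \<xi>))" by (simp add: norm_sum)
      also have "\<dots> = Gsum L \<xi>" unfolding L_def Gsum_map
        by (simp add: sum_set_upt_conv_sum_list_nat[symmetric] lessThan_atLeast0)
      finally show "norm (X3 t u s \<xi>) \<le> Gsum L \<xi>" .
    qed
    also have "Bsum L = C * (t - s) powr \<mu>" unfolding L_def Bsum_map C_def
      by (simp add: sum_set_upt_conv_sum_list_nat[symmetric] lessThan_atLeast0 sum_distrib_right)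
    finally show "L1N \<phi> (X3 t u s) \<le> ennreal (C * (t - s) powr \<mu>)" .
  qed
qed



lemma ennreal_fin_eq: "x < \<infinity> \<Longrightarrow> x = ennreal (enn2real x)" for x :: ennreal
  by simp

lemma sewing_step:
  fixes X1 :: "real \<Rightarrow> real \<Rightarrow> real \<Rightarrow> real^'n"
    and X2 :: "real \<Rightarrow> real \<Rightarrow> real \<Rightarrow> real^'n^'n"
    and X3 :: "real \<Rightarrow> real \<Rightarrow> real \<Rightarrow> real \<Rightarrow> real^'n^'n"
    and B :: "real \<Rightarrow> real \<Rightarrow> real \<Rightarrow> real"
  assumes \<phi>m: "set_borel_measurable lborel {0<..} \<phi>"
    and sut: "s < u" "u < t"
    and rel: "\<And>\<xi>. \<xi> > 0 \<Longrightarrow> tdelta2 B t u s \<xi> = Hterm X1 X2 X3 f \<zeta> r t u s \<xi>"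
    and Bm1: "set_borel_measurable lborel {0<..} (B t u)" and Bm2: "set_borel_measurable lborel {0<..} (B u s)"
    and Bf1: "L1N \<phi> (B t u) < \<infinity>" and Bf2: "L1N \<phi> (B u s) < \<infinity>"
    and X1m: "set_borel_measurable lborel {0<..} (X1 t u)" and X2m: "set_borel_measurable lborel {0<..} (X2 t u)"
    and X3m: "set_borel_measurable lborel {0<..} (X3 t u s)"
    and X1b: "L1N \<phi> (X1 t u) \<le> ennreal V1" and X2b: "L1N \<phi> (X2 t u) \<le> ennreal V2" and X3b: "L1N \<phi> (X3 t u s) \<le> ennreal V3"
    and V: "0 \<le> V1" "0 \<le> V2" "0 \<le> V3"
  shows "L1N \<phi> (B t s) \<le> ennreal (enn2real (L1N \<phi> (B t u)) + enn2real (L1N \<phi> (B u s))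
     + norm (r u s + f u s) * V1 + real (CARD('n))^2 * norm (\<zeta> u - \<zeta> s) * V2 + real (CARD('n))^2 * norm (\<zeta> s) * V3)"
proof -
  let ?cn = "real (CARD('n))^2"
  define L where "L = [(1::real, \<lambda>\<xi>. norm (B t u \<xi>), enn2real (L1N \<phi> (B t u))),
     (1, \<lambda>\<xi>. norm (B u s \<xi>), enn2real (L1N \<phi> (B u s))),
     (norm (r u s + f u s), \<lambda>\<xi>. norm (X1 t u \<xi>), V1),
     (?cn * norm (\<zeta> u - \<zeta> s), \<lambda>\<xi>. norm (X2 t u \<xi>), V2),
     (?cn * norm (\<zeta> s), \<lambda>\<xi>. norm (X3 t u s \<xi>), V3)]"
  have a1: "set_borel_measurable lborel {0<..} (\<lambda>\<xi>. \<bar>B t u \<xi>\<bar>)" "set_borel_measurable lborel {0<..} (\<lambda>\<xi>. \<bar>B u s \<xi>\<bar>)"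
    using sbm_norm[OF Bm1] sbm_norm[OF Bm2] by simp_all
  have a2: "L1N \<phi> (\<lambda>\<xi>. \<bar>B t u \<xi>\<bar>) = L1N \<phi> (B t u)" "L1N \<phi> (\<lambda>\<xi>. \<bar>B u s \<xi>\<bar>) = L1N \<phi> (B u s)"
    using L1N_norm[of \<phi> "B t u"] L1N_norm[of \<phi> "B u s"] by simp_all
  have ok: "okL \<phi> L" unfolding okL_def L_def
    using a1 a2 Bm1 Bm2 X1m X2m X3m X1b X2b X3b V Bf1 Bf2
    by (simp add: sbm_norm L1N_norm)
  have "L1N \<phi> (B t s) \<le> ennreal (Bsum L)"
  proof (rule L1N_dom[OF \<phi>m ok])
    fix \<xi> :: real assume \<xi>: "\<xi> > 0"
    have e: "exp (- \<xi> * (t - u)) \<le> 1" using \<xi> sut by (simp add: mult_nonneg_nonneg)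
    have eq: "B t s \<xi> = B t u \<xi> + exp (- \<xi> * (t - u)) * B u s \<xi>
       + ((X1 t u \<xi> \<bullet> (r u s + f u s) + mdot (X2 t u \<xi>) (transpose (\<zeta> u - \<zeta> s)))
       - mdot (X3 t u s \<xi>) (transpose (\<zeta> s)))"
      using rel[OF \<xi>] unfolding tdelta2_def Hterm_def by (simp add: algebra_simps)
    have i1: "\<bar>X1 t u \<xi> \<bullet> (r u s + f u s)\<bar> \<le> norm (r u s + f u s) * norm (X1 t u \<xi>)"
      using Cauchy_Schwarz_ineq2[of "X1 t u \<xi>" "r u s + f u s"] by (simp add: mult.commute)
    have i2: "\<bar>mdot (X2 t u \<xi>) (transpose (\<zeta> u - \<zeta> s))\<bar> \<le> ?cn * norm (\<zeta> u - \<zeta> s) * norm (X2 t u \<xi>)"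
      using mdotT_bound[of "X2 t u \<xi>" "\<zeta> u - \<zeta> s"] by (simp add: mult_ac)
    have i3: "\<bar>mdot (X3 t u s \<xi>) (transpose (\<zeta> s))\<bar> \<le> ?cn * norm (\<zeta> s) * norm (X3 t u s \<xi>)"
      using mdotT_bound[of "X3 t u s \<xi>" "\<zeta> s"] by (simp add: mult_ac)
    have i4: "\<bar>exp (- \<xi> * (t - u)) * B u s \<xi>\<bar> \<le> \<bar>B u s \<xi>\<bar>"
      using e by (simp add: abs_mult mult_left_le_one_le)
    have "norm (B t s \<xi>) \<le> \<bar>B t u \<xi>\<bar> + \<bar>B u s \<xi>\<bar> + norm (r u s + f u s) * norm (X1 t u \<xi>)
        + ?cn * norm (\<zeta> u - \<zeta> s) * norm (X2 t u \<xi>) + ?cn * norm (\<zeta> s) * norm (X3 t u s \<xi>)"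
      unfolding eq real_norm_def using i1 i2 i3 i4 by linarith
    then show "norm (B t s \<xi>) \<le> Gsum L \<xi>" unfolding L_def Gsum_def by simp
  qed
  also have "Bsum L = enn2real (L1N \<phi> (B t u)) + enn2real (L1N \<phi> (B u s))
     + norm (r u s + f u s) * V1 + ?cn * norm (\<zeta> u - \<zeta> s) * V2 + ?cn * norm (\<zeta> s) * V3"
    unfolding L_def Bsum_def by simp
  finally show ?thesis .
qed



lemma main_bound:
  fixes \<phi> :: "real \<Rightarrow> real" and T \<gamma> \<kappa> C1 C2 C3 a b \<mu> :: real
    and X1 :: "real \<Rightarrow> real \<Rightarrow> real \<Rightarrow> real^'n"
    and X2 :: "real \<Rightarrow> real \<Rightarrow> real \<Rightarrow> real^'n^'n"
    and X3 :: "real \<Rightarrow> real \<Rightarrow> real \<Rightarrow> real \<Rightarrow> real^'n^'n"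
    and f :: "real \<Rightarrow> real \<Rightarrow> real^'n" and h :: "real^'n" and z :: "real \<Rightarrow> real^'n"
    and \<zeta> :: "real \<Rightarrow> real^'n^'n" and r :: "real \<Rightarrow> real \<Rightarrow> real^'n"
    and zt :: "real \<Rightarrow> real \<Rightarrow> real" and B :: "real \<Rightarrow> real \<Rightarrow> real \<Rightarrow> real"
  assumes \<phi>m: "set_borel_measurable lborel {0<..} \<phi>"
    and k1: "1/3 < \<kappa>" and k2: "\<kappa> < \<gamma>" and k3: "\<gamma> < 1/2"
    and ab: "0 \<le> a" "a < b" "b \<le> T"
    and C: "0 \<le> C1" "0 \<le> C2" "0 \<le> C3"
    and X1m: "\<And>t s. 0 \<le> s \<Longrightarrow> s \<le> t \<Longrightarrow> t \<le> T \<Longrightarrow> set_borel_measurable lborel {0<..} (X1 t s)"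
    and X2m: "\<And>t s. 0 \<le> s \<Longrightarrow> s \<le> t \<Longrightarrow> t \<le> T \<Longrightarrow> set_borel_measurable lborel {0<..} (X2 t s)"
    and X3m: "\<And>t u s. 0 \<le> s \<Longrightarrow> s \<le> u \<Longrightarrow> u \<le> t \<Longrightarrow> t \<le> T \<Longrightarrow> set_borel_measurable lborel {0<..} (X3 t u s)"
    and X1b: "\<And>t s. 0 \<le> s \<Longrightarrow> s < t \<Longrightarrow> t \<le> T \<Longrightarrow> L1N \<phi> (X1 t s) \<le> ennreal (C1 * (t - s) powr \<gamma>)"
    and X2b: "\<And>t s. 0 \<le> s \<Longrightarrow> s < t \<Longrightarrow> t \<le> T \<Longrightarrow> L1N \<phi> (X2 t s) \<le> ennreal (C2 * (t - s) powr (2 * \<gamma>))"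
    and X3b: "\<And>t u s. 0 \<le> s \<Longrightarrow> s < u \<Longrightarrow> u < t \<Longrightarrow> t \<le> T \<Longrightarrow> L1N \<phi> (X3 t u s) \<le> ennreal (C3 * (t - s) powr (3 * \<gamma>))"
    and fN: "pN2 {a..b} 1 f < \<infinity>"
    and zA: "inA \<phi> X1 a b \<kappa> \<gamma> f h z \<zeta> r"
    and BL: "isLambda \<phi> a b \<mu> (Hterm X1 X2 X3 f \<zeta> r) B"
    and zrel: "\<forall>s t. a \<le> s \<longrightarrow> s \<le> t \<longrightarrow> t \<le> b \<longrightarrow> (\<forall>\<xi>>0. tdelta1 zt t s \<xi> = Jint X1 X2 z \<zeta> B t s \<xi>)"
    and z0fin: "pN0 {a..b} z < \<infinity>" and MAfin: "MA a b \<kappa> z \<zeta> r < \<infinity>"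
  shows "QN \<phi> X1 {a..b} \<kappa> zt z
       \<le> ennreal ((1 + max 1 T * (C1 + real (CARD('n))^2 * C2 + 1 / (1 - 2 powr (1 - (\<gamma> + 2 * \<kappa>))) * (2 * C1 + real (CARD('n))^2 * C2 + real (CARD('n))^2 * C3))
            + max 1 T * (real (CARD('n))^2 * C2 + 1 / (1 - 2 powr (1 - (\<gamma> + 2 * \<kappa>))) * (2 * C1 + real (CARD('n))^2 * C2 + real (CARD('n))^2 * C3))
            + max 1 T * (2 + real (CARD('n))^2 * C1)))
         * (pN0 {a..b} z + ennreal ((b - a) powr (\<gamma> - \<kappa>)) * MA a b \<kappa> z \<zeta> r
                       + ennreal ((b - a) powr (1 - \<kappa>)) * pN2 {a..b} 1 f)"
proof -
  define cn where "cn = real (CARD('n))^2"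
  define Tm where "Tm = max 1 T"
  define \<theta> where "\<theta> = \<gamma> + 2 * \<kappa>"
  define Sw where "Sw = 1 / (1 - 2 powr (1 - \<theta>))"
  define \<epsilon> where "\<epsilon> = b - a"
  define I where "I = {a..b}"
  have \<epsilon>: "0 < \<epsilon>" "\<epsilon> \<le> T" unfolding \<epsilon>_def using ab by auto
  have cn: "0 \<le> cn" unfolding cn_def by simp
  have Tm: "1 \<le> Tm" "T \<le> Tm" unfolding Tm_def by auto
  have th: "1 < \<theta>" unfolding \<theta>_def using k1 k2 by simp
  have Sw: "0 < Sw" unfolding Sw_def using th by (auto intro!: powr_less_one)
  have MAeq: "MA a b \<kappa> z \<zeta> r = pN0 {a..b} \<zeta> + pNhol {a..b} \<kappa> \<zeta> + pN2 {a..b} (2 * \<kappa>) r + pNhol {a..b} \<kappa> z"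
    unfolding MA_def ..
  have fin: "pN0 {a..b} \<zeta> < \<infinity>" "pNhol {a..b} \<kappa> \<zeta> < \<infinity>" "pN2 {a..b} (2 * \<kappa>) r < \<infinity>" "pNhol {a..b} \<kappa> z < \<infinity>"
    using MAfin unfolding MAeq by (auto simp: top.not_eq_extremum)
  define z0 where "z0 = enn2real (pN0 {a..b} z)"
  define \<zeta>0 where "\<zeta>0 = enn2real (pN0 {a..b} \<zeta>)"
  define \<zeta>H where "\<zeta>H = enn2real (pNhol {a..b} \<kappa> \<zeta>)"
  define R where "R = enn2real (pN2 {a..b} (2 * \<kappa>) r)"
  define zH where "zH = enn2real (pNhol {a..b} \<kappa> z)"
  define F where "F = enn2real (pN2 {a..b} 1 f)"
  define m where "m = \<zeta>0 + \<zeta>H + R + zH"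
  have nn: "0 \<le> z0" "0 \<le> \<zeta>0" "0 \<le> \<zeta>H" "0 \<le> R" "0 \<le> zH" "0 \<le> F"
    unfolding z0_def \<zeta>0_def \<zeta>H_def R_def zH_def F_def by auto
  have MAr: "MA a b \<kappa> z \<zeta> r = ennreal m"
  proof -
    have "MA a b \<kappa> z \<zeta> r = ennreal \<zeta>0 + ennreal \<zeta>H + ennreal R + ennreal zH"
      unfolding MAeq \<zeta>0_def \<zeta>H_def R_def zH_def using fin by simp
    also have "\<dots> = ennreal m" unfolding m_def using nn
      by (simp add: ennreal_plus[symmetric] add_nonneg_nonneg del: ennreal_plus)
    finally show ?thesis .
  qed
  have zb: "\<And>s. s \<in> I \<Longrightarrow> norm (z s) \<le> z0" unfolding z0_def I_def using pN0_bound[OF z0fin] by blast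
  have \<zeta>b: "\<And>s. s \<in> I \<Longrightarrow> norm (\<zeta> s) \<le> \<zeta>0" unfolding \<zeta>0_def I_def using pN0_bound[OF fin(1)] by blast
  have \<zeta>hol: "\<And>s t. s \<in> I \<Longrightarrow> t \<in> I \<Longrightarrow> s < t \<Longrightarrow> norm (\<zeta> t - \<zeta> s) \<le> \<zeta>H * (t - s) powr \<kappa>"
    unfolding \<zeta>H_def I_def using pNhol_bound[OF fin(2)] by blast
  have rb: "\<And>s t. s \<in> I \<Longrightarrow> t \<in> I \<Longrightarrow> s < t \<Longrightarrow> norm (r t s) \<le> R * (t - s) powr (2 * \<kappa>)"
    unfolding R_def I_def using pN2_bound[OF fin(3)] by blast
  have fb: "\<And>s t. s \<in> I \<Longrightarrow> t \<in> I \<Longrightarrow> s < t \<Longrightarrow> norm (f t s) \<le> F * (t - s)"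
    unfolding F_def I_def using pN2_bound[OF fN] by fastforce
  have zdec: "\<And>s t. s \<in> I \<Longrightarrow> t \<in> I \<Longrightarrow> s \<le> t \<Longrightarrow> z t - z s - f t s = x1_of \<phi> X1 t s v* \<zeta> s + r t s"
    using zA unfolding inA_def I_def by auto
  have x1b: "\<And>s t. s \<in> I \<Longrightarrow> t \<in> I \<Longrightarrow> s < t \<Longrightarrow> norm (x1_of \<phi> X1 t s) \<le> C1 * (t - s) powr \<gamma>"
  proof -
    fix s t assume st: "s \<in> I" "t \<in> I" "s < t"
    then have st': "0 \<le> s" "s < t" "t \<le> T" using ab unfolding I_def by auto
    show "norm (x1_of \<phi> X1 t s) \<le> C1 * (t - s) powr \<gamma>"
      by (rule x1_bound[where X=X1 and t=t and s=s, OF \<phi>m X1m X1b[OF st']]) (use st' C in auto)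
  qed
  have \<mu>1: "1 < \<mu>" and BtC: "tC2 \<phi> {a..b} \<mu> B"
    and Brel: "\<And>t u s \<xi>. a \<le> s \<Longrightarrow> s \<le> u \<Longrightarrow> u \<le> t \<Longrightarrow> t \<le> b \<Longrightarrow> \<xi> > 0 \<Longrightarrow>
        tdelta2 B t u s \<xi> = Hterm X1 X2 X3 f \<zeta> r t u s \<xi>"
    using BL unfolding isLambda_def by auto
  have BinL: "\<And>s t. a \<le> s \<Longrightarrow> s \<le> t \<Longrightarrow> t \<le> b \<Longrightarrow> inL1 \<phi> (B t s)"
    using BtC unfolding tC2_def cont2_def by auto
  have Bm: "\<And>s t. a \<le> s \<Longrightarrow> s \<le> t \<Longrightarrow> t \<le> b \<Longrightarrow> set_borel_measurable lborel {0<..} (B t s)"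
    and Bfin: "\<And>s t. a \<le> s \<Longrightarrow> s \<le> t \<Longrightarrow> t \<le> b \<Longrightarrow> L1N \<phi> (B t s) < \<infinity>"
    using BinL unfolding inL1_def by auto
  have BN: "tN2 \<phi> {a..b} \<mu> B < \<infinity>" using BtC unfolding tC2_def by auto
  define N\<mu> where "N\<mu> = enn2real (tN2 \<phi> {a..b} \<mu> B)"
  define M where "M t s = enn2real (L1N \<phi> (B t s))" for t s
  have MB: "\<And>s t. a \<le> s \<Longrightarrow> s \<le> t \<Longrightarrow> t \<le> b \<Longrightarrow> L1N \<phi> (B t s) = ennreal (M t s)"
    unfolding M_def using Bfin by simp
  have Mnn: "\<And>s t. 0 \<le> M t s" unfolding M_def by simp
  have Mmu: "\<And>s t. a \<le> s \<Longrightarrow> s < t \<Longrightarrow> t \<le> b \<Longrightarrow> M t s \<le> N\<mu> * (t - s) powr \<mu>"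
  proof -
    fix s t assume st: "a \<le> s" "s < t" "t \<le> b"
    have "ennreal (M t s) \<le> ennreal (N\<mu> * (t - s) powr \<mu>)"
      using tN2_bound[OF BN, of t s] st MB[of s t] unfolding N\<mu>_def by auto
    then show "M t s \<le> N\<mu> * (t - s) powr \<mu>" by (subst (asm) ennreal_le_iff) (auto simp: N\<mu>_def)
  qed
  define K where "K = C1 * R + C1 * F * \<epsilon> powr (1 - 2 * \<kappa>) + cn * C2 * \<zeta>H * \<epsilon> powr (\<gamma> - \<kappa>)
      + cn * C3 * \<zeta>0 * \<epsilon> powr (2 * \<gamma> - 2 * \<kappa>)"
  have K0: "0 \<le> K" unfolding K_def using C nn cn by simp
  have Msplit: "M t s \<le> M t ((s + t) / 2) + M ((s + t) / 2) s + K * (t - s) powr \<theta>"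
    if st: "a \<le> s" "s < t" "t \<le> b" for s t
  proof -
    define u where "u = (s + t) / 2"
    define \<delta> where "\<delta> = t - s"
    have u: "s < u" "u < t" "t - u = \<delta> / 2" "u - s = \<delta> / 2" unfolding u_def \<delta>_def using st by (auto simp: field_simps)
    have \<delta>: "0 < \<delta>" "\<delta> \<le> \<epsilon>" unfolding \<delta>_def \<epsilon>_def using st by auto
    have inI: "s \<in> I" "u \<in> I" "t \<in> I" unfolding I_def using st u by auto
    have bf: "L1N \<phi> (B t u) < \<infinity>" "L1N \<phi> (B u s) < \<infinity>" using Bfin[of u t] Bfin[of s u] st u by auto
    have step: "L1N \<phi> (B t s) \<le> ennreal (enn2real (L1N \<phi> (B t u)) + enn2real (L1N \<phi> (B u s))
     + norm (r u s + f u s) * (C1 * (t - u) powr \<gamma>) + cn * norm (\<zeta> u - \<zeta> s) * (C2 * (t - u) powr (2 * \<gamma>))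
     + cn * norm (\<zeta> s) * (C3 * (t - s) powr (3 * \<gamma>)))"
      unfolding cn_def
      by (rule sewing_step[OF \<phi>m u(1,2)])
         (use st u ab C bf in \<open>auto intro!: Brel Bm X1m X2m X3m X1b X2b X3b\<close>)
    have r1: "norm (r u s + f u s) \<le> R * \<delta> powr (2 * \<kappa>) + F * \<delta>"
    proof -
      have "norm (r u s + f u s) \<le> norm (r u s) + norm (f u s)" by (rule norm_triangle_ineq)
      also have "norm (r u s) \<le> R * \<delta> powr (2 * \<kappa>)"
      proof -
        have "(u - s) powr (2 * \<kappa>) \<le> \<delta> powr (2 * \<kappa>)" using u \<delta> k1 by (intro powr_mono2) auto
        then show ?thesis using rb[OF inI(1,2) u(1)] nn by (meson mult_left_mono order_trans)
      qed
      also have "norm (f u s) \<le> F * \<delta>"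
      proof -
        have "u - s \<le> \<delta>" using u \<delta> by auto
        then show ?thesis using fb[OF inI(1,2) u(1)] nn by (meson mult_left_mono order_trans)
      qed
      finally show ?thesis by simp
    qed
    have p1: "C1 * (t - u) powr \<gamma> \<le> C1 * \<delta> powr \<gamma>"
      using u \<delta> C k2 k1 by (intro mult_left_mono powr_mono2) auto
    have p2: "C2 * (t - u) powr (2 * \<gamma>) \<le> C2 * \<delta> powr (2 * \<gamma>)"
      using u \<delta> C k2 k1 by (intro mult_left_mono powr_mono2) auto
    have z1: "norm (\<zeta> u - \<zeta> s) \<le> \<zeta>H * \<delta> powr \<kappa>"
    proof -
      have "(u - s) powr \<kappa> \<le> \<delta> powr \<kappa>" using u \<delta> k1 by (intro powr_mono2) auto
      then show ?thesis using \<zeta>hol[OF inI(1,2) u(1)] nn by (meson mult_left_mono order_trans)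
    qed
    have t1: "norm (r u s + f u s) * (C1 * (t - u) powr \<gamma>) \<le> (R * \<delta> powr (2 * \<kappa>) + F * \<delta>) * (C1 * \<delta> powr \<gamma>)"
      by (rule mult_mono[OF r1 p1]) (use nn \<delta> C in auto)
    have t2: "cn * norm (\<zeta> u - \<zeta> s) * (C2 * (t - u) powr (2 * \<gamma>)) \<le> cn * (\<zeta>H * \<delta> powr \<kappa>) * (C2 * \<delta> powr (2 * \<gamma>))"
      by (rule mult_mono[OF mult_left_mono[OF z1 cn] p2]) (use nn \<delta> C cn in auto)
    have t3: "cn * norm (\<zeta> s) * (C3 * (t - s) powr (3 * \<gamma>)) \<le> cn * \<zeta>0 * (C3 * \<delta> powr (3 * \<gamma>))"
      unfolding \<delta>_def by (rule mult_mono[OF mult_left_mono[OF \<zeta>b[OF inI(1)] cn]]) (use nn C cn in auto)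
    have e1: "\<delta> powr (2 * \<kappa>) * \<delta> powr \<gamma> = \<delta> powr \<theta>" unfolding \<theta>_def by (simp add: powr_add[symmetric] add_ac)
    have e2: "\<delta> * \<delta> powr \<gamma> \<le> \<delta> powr \<theta> * \<epsilon> powr (1 - 2 * \<kappa>)"
    proof -
      have "\<delta> powr \<theta> * \<delta> powr (1 - 2 * \<kappa>) = \<delta> powr 1 * \<delta> powr \<gamma>"
        unfolding \<theta>_def by (simp only: powr_add[symmetric]) (simp add: algebra_simps)
      then have "\<delta> * \<delta> powr \<gamma> = \<delta> powr \<theta> * \<delta> powr (1 - 2 * \<kappa>)" using \<delta> by simp
      also have "\<dots> \<le> \<delta> powr \<theta> * \<epsilon> powr (1 - 2 * \<kappa>)"
        using \<delta> k3 k1 k2 by (intro mult_left_mono powr_mono2) auto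
      finally show ?thesis .
    qed
    have e3: "\<delta> powr \<kappa> * \<delta> powr (2 * \<gamma>) \<le> \<delta> powr \<theta> * \<epsilon> powr (\<gamma> - \<kappa>)"
    proof -
      have "\<delta> powr \<kappa> * \<delta> powr (2 * \<gamma>) = \<delta> powr \<theta> * \<delta> powr (\<gamma> - \<kappa>)"
        unfolding \<theta>_def by (simp add: powr_add[symmetric] algebra_simps)
      also have "\<dots> \<le> \<delta> powr \<theta> * \<epsilon> powr (\<gamma> - \<kappa>)"
        using \<delta> k2 by (intro mult_left_mono powr_mono2) auto
      finally show ?thesis .
    qed
    have e4: "\<delta> powr (3 * \<gamma>) \<le> \<delta> powr \<theta> * \<epsilon> powr (2 * \<gamma> - 2 * \<kappa>)"
    proof -
      have "\<delta> powr (3 * \<gamma>) = \<delta> powr \<theta> * \<delta> powr (2 * \<gamma> - 2 * \<kappa>)"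
        unfolding \<theta>_def by (simp add: powr_add[symmetric] algebra_simps)
      also have "\<dots> \<le> \<delta> powr \<theta> * \<epsilon> powr (2 * \<gamma> - 2 * \<kappa>)"
        using \<delta> k2 by (intro mult_left_mono powr_mono2) auto
      finally show ?thesis .
    qed
    have rest: "(R * \<delta> powr (2 * \<kappa>) + F * \<delta>) * (C1 * \<delta> powr \<gamma>) + cn * (\<zeta>H * \<delta> powr \<kappa>) * (C2 * \<delta> powr (2 * \<gamma>))
        + cn * \<zeta>0 * (C3 * \<delta> powr (3 * \<gamma>)) \<le> K * \<delta> powr \<theta>"
    proof -
      have a1: "(R * \<delta> powr (2 * \<kappa>) + F * \<delta>) * (C1 * \<delta> powr \<gamma>) = C1 * R * (\<delta> powr (2 * \<kappa>) * \<delta> powr \<gamma>) + C1 * F * (\<delta> * \<delta> powr \<gamma>)"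
        by (simp add: algebra_simps)
      have a2: "cn * (\<zeta>H * \<delta> powr \<kappa>) * (C2 * \<delta> powr (2 * \<gamma>)) = cn * C2 * \<zeta>H * (\<delta> powr \<kappa> * \<delta> powr (2 * \<gamma>))"
        by (simp add: algebra_simps)
      have a3: "cn * \<zeta>0 * (C3 * \<delta> powr (3 * \<gamma>)) = cn * C3 * \<zeta>0 * \<delta> powr (3 * \<gamma>)" by simp
      have b2: "C1 * F * (\<delta> * \<delta> powr \<gamma>) \<le> C1 * F * (\<delta> powr \<theta> * \<epsilon> powr (1 - 2 * \<kappa>))"
        using e2 C nn by (intro mult_left_mono) auto
      have b3: "cn * C2 * \<zeta>H * (\<delta> powr \<kappa> * \<delta> powr (2 * \<gamma>)) \<le> cn * C2 * \<zeta>H * (\<delta> powr \<theta> * \<epsilon> powr (\<gamma> - \<kappa>))"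
        using e3 C nn cn by (intro mult_left_mono) auto
      have b4: "cn * C3 * \<zeta>0 * \<delta> powr (3 * \<gamma>) \<le> cn * C3 * \<zeta>0 * (\<delta> powr \<theta> * \<epsilon> powr (2 * \<gamma> - 2 * \<kappa>))"
        using e4 C nn cn by (intro mult_left_mono) auto
      show ?thesis unfolding a1 a2 a3 e1 K_def using b2 b3 b4 by (simp add: algebra_simps)
    qed
    have "ennreal (M t s) \<le> ennreal (M t u + M u s + (norm (r u s + f u s) * (C1 * (t - u) powr \<gamma>)
      + cn * norm (\<zeta> u - \<zeta> s) * (C2 * (t - u) powr (2 * \<gamma>)) + cn * norm (\<zeta> s) * (C3 * (t - s) powr (3 * \<gamma>))))"
      using step MB[of s t] st unfolding M_def by (simp add: add_ac)
    then have "M t s \<le> M t u + M u s + (norm (r u s + f u s) * (C1 * (t - u) powr \<gamma>)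
      + cn * norm (\<zeta> u - \<zeta> s) * (C2 * (t - u) powr (2 * \<gamma>)) + cn * norm (\<zeta> s) * (C3 * (t - s) powr (3 * \<gamma>)))"
      by (subst (asm) ennreal_le_iff) (auto intro!: add_nonneg_nonneg mult_nonneg_nonneg simp: Mnn cn C)
    then show ?thesis using t1 t2 t3 rest unfolding u_def[symmetric] \<delta>_def[symmetric] by linarith
  qed
  have Mb: "M t s \<le> Sw * K * (t - s) powr \<theta>" if st: "a \<le> s" "s < t" "t \<le> b" for s t
    using sew_real[of \<mu> \<theta> K N\<mu> a b M, OF \<mu>1 th K0 _ Mmu Msplit st] unfolding Sw_def N\<mu>_def
    by simp
  define e where "e = \<epsilon> powr (\<gamma> - \<kappa>)"
  define fp where "fp = \<epsilon> powr (1 - \<kappa>)"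
  define Q where "Q = z0 + e * m + fp * F"
  have e0: "0 \<le> e" "0 \<le> fp" unfolding e_def fp_def by auto
  have Qb: "z0 \<le> Q" "e * \<zeta>0 \<le> Q" "e * \<zeta>H \<le> Q" "e * R \<le> Q" "fp * F \<le> Q" "1 * z0 \<le> Q"
  proof -
    have "e * \<zeta>0 \<le> e * m" "e * \<zeta>H \<le> e * m" "e * R \<le> e * m"
      unfolding m_def using nn e0 by (auto intro!: mult_left_mono)
    moreover have "0 \<le> e * m" "0 \<le> fp * F" "0 \<le> z0" unfolding m_def using nn e0 by auto
    ultimately show "z0 \<le> Q" "e * \<zeta>0 \<le> Q" "e * \<zeta>H \<le> Q" "e * R \<le> Q" "fp * F \<le> Q" "1 * z0 \<le> Q"
      unfolding Q_def by linarith+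
  qed
  have Q0: "0 \<le> Q" using Qb(1) nn by linarith
  have cm: "\<And>x y e'. 0 \<le> x \<Longrightarrow> y \<le> e' * Tm \<Longrightarrow> e' * x \<le> Q \<Longrightarrow> x * y \<le> Tm * Q"
  proof -
    fix x y e' :: real assume x: "0 \<le> x" and y: "y \<le> e' * Tm" and ex: "e' * x \<le> Q"
    have "x * y \<le> x * (e' * Tm)" by (rule mult_left_mono[OF y x])
    also have "\<dots> = (e' * x) * Tm" by simp
    also have "\<dots> \<le> Q * Tm" using ex Tm by (intro mult_right_mono) auto
    finally show "x * y \<le> Tm * Q" by (simp add: mult.commute)
  qed
  have pw0: "\<And>\<delta> bb q. 0 < \<delta> \<Longrightarrow> \<delta> \<le> \<epsilon> \<Longrightarrow> 0 \<le> q \<Longrightarrow> q \<le> bb \<Longrightarrow> bb - q \<le> 1 \<Longrightarrow> \<delta> powr bb \<le> \<epsilon> powr q * Tm"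
    using pw2[where a=0] \<epsilon> unfolding Tm_def by fastforce
  have Kp: "K * \<delta> powr p \<le> Tm * Q * (2 * C1 + cn * C2 + cn * C3)"
    if h1: "\<delta> powr p \<le> e * Tm" and h2: "\<epsilon> powr (1 - 2 * \<kappa>) * \<delta> powr p \<le> fp * Tm"
      and h3: "\<delta> powr p \<le> 1 * Tm" and h4: "\<epsilon> powr (2 * \<gamma> - 2 * \<kappa>) * \<delta> powr p \<le> e * Tm" for \<delta> p
  proof -
    have eq: "K * \<delta> powr p = C1 * (R * \<delta> powr p) + C1 * (F * (\<epsilon> powr (1 - 2 * \<kappa>) * \<delta> powr p))
      + cn * C2 * (\<zeta>H * (e * \<delta> powr p)) + cn * C3 * (\<zeta>0 * (\<epsilon> powr (2 * \<gamma> - 2 * \<kappa>) * \<delta> powr p))"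
      unfolding K_def e_def by (simp add: algebra_simps)
    have h3': "e * \<delta> powr p \<le> e * Tm" using h3 e0 by (simp add: mult_left_mono)
    have 1: "R * \<delta> powr p \<le> Tm * Q" by (rule cm[OF _ h1]) (use nn Qb in auto)
    have 2: "F * (\<epsilon> powr (1 - 2 * \<kappa>) * \<delta> powr p) \<le> Tm * Q" by (rule cm[OF _ h2]) (use nn Qb in auto)
    have 3: "\<zeta>H * (e * \<delta> powr p) \<le> Tm * Q" by (rule cm[OF _ h3']) (use nn Qb in auto)
    have 4: "\<zeta>0 * (\<epsilon> powr (2 * \<gamma> - 2 * \<kappa>) * \<delta> powr p) \<le> Tm * Q" by (rule cm[OF _ h4]) (use nn Qb in auto)
    have "C1 * (R * \<delta> powr p) \<le> C1 * (Tm * Q)" by (rule mult_left_mono[OF 1 C(1)])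
    moreover have "C1 * (F * (\<epsilon> powr (1 - 2 * \<kappa>) * \<delta> powr p)) \<le> C1 * (Tm * Q)" by (rule mult_left_mono[OF 2 C(1)])
    moreover have "cn * C2 * (\<zeta>H * (e * \<delta> powr p)) \<le> cn * C2 * (Tm * Q)" by (rule mult_left_mono[OF 3]) (use cn C in auto)
    moreover have "cn * C3 * (\<zeta>0 * (\<epsilon> powr (2 * \<gamma> - 2 * \<kappa>) * \<delta> powr p)) \<le> cn * C3 * (Tm * Q)" by (rule mult_left_mono[OF 4]) (use cn C in auto)
    moreover have "Tm * Q * (2 * C1 + cn * C2 + cn * C3) = C1 * (Tm * Q) + C1 * (Tm * Q) + cn * C2 * (Tm * Q) + cn * C3 * (Tm * Q)"
      by (simp add: algebra_simps)
    ultimately show ?thesis unfolding eq by linarith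
  qed
  define SC where "SC = 2 * C1 + cn * C2 + cn * C3"
  have SC0: "0 \<le> SC" unfolding SC_def using C cn by simp
  define A1 where "A1 = Tm * (C1 + cn * C2 + Sw * SC)"
  define A4 where "A4 = Tm * (cn * C2 + Sw * SC)"
  define Ah where "Ah = Tm * (2 + cn * C1)"
  have A0: "0 \<le> A1" "0 \<le> A4" "0 \<le> Ah" unfolding A1_def A4_def Ah_def using Tm C cn Sw SC0 by auto
  have Bsm: "\<And>s t. a \<le> s \<Longrightarrow> s \<le> t \<Longrightarrow> t \<le> b \<Longrightarrow> set_borel_measurable lborel {0<..} (\<lambda>\<xi>. \<bar>B t s \<xi>\<bar>)"
  proof -
    fix s t assume "a \<le> s" "s \<le> t" "t \<le> b"
    then show "set_borel_measurable lborel {0<..} (\<lambda>\<xi>. \<bar>B t s \<xi>\<bar>)" using sbm_norm[OF Bm[of s t]] by simp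
  qed
  have BL1: "\<And>s t. a \<le> s \<Longrightarrow> s \<le> t \<Longrightarrow> t \<le> b \<Longrightarrow> L1N \<phi> (\<lambda>\<xi>. \<bar>B t s \<xi>\<bar>) = ennreal (M t s)"
  proof -
    fix s t assume st: "a \<le> s" "s \<le> t" "t \<le> b"
    have "L1N \<phi> (\<lambda>\<xi>. \<bar>B t s \<xi>\<bar>) = L1N \<phi> (B t s)" using L1N_norm[of \<phi> "B t s"] by simp
    then show "L1N \<phi> (\<lambda>\<xi>. \<bar>B t s \<xi>\<bar>) = ennreal (M t s)" using MB[OF st] by simp
  qed
  have term1: "tN2 \<phi> I \<kappa> (tdelta1 zt) \<le> ennreal (A1 * Q)"
  proof (rule tN2_le)
    show "0 \<le> A1 * Q" using A0 Q0 by simp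
    fix t s assume inI: "t \<in> I" "s \<in> I" and st: "s < t"
    have st': "a \<le> s" "s < t" "t \<le> b" using inI st unfolding I_def by auto
    define \<delta> where "\<delta> = t - s"
    have \<delta>: "0 < \<delta>" "\<delta> \<le> \<epsilon>" unfolding \<delta>_def \<epsilon>_def using st' by auto
    define L where "L = [(norm (z s), \<lambda>\<xi>. norm (X1 t s \<xi>), C1 * \<delta> powr \<gamma>),
       (cn * norm (\<zeta> s), \<lambda>\<xi>. norm (X2 t s \<xi>), C2 * \<delta> powr (2 * \<gamma>)),
       (1, \<lambda>\<xi>. \<bar>B t s \<xi>\<bar>, M t s)]"
    have ok: "okL \<phi> L" unfolding okL_def L_def
      using sbm_norm[OF X1m[of s t]] sbm_norm[OF X2m[of s t]] X1b[of s t] X2b[of s t] Bsm[of s t] BL1[of s t]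
        st' ab C cn Mnn unfolding \<delta>_def by (simp add: L1N_norm)
    have "L1N \<phi> (tdelta1 zt t s) \<le> ennreal (Bsum L)"
    proof (rule L1N_dom[OF \<phi>m ok])
      fix \<xi> :: real assume \<xi>: "\<xi> > 0"
      have eq: "tdelta1 zt t s \<xi> = X1 t s \<xi> \<bullet> z s + mdot (X2 t s \<xi>) (transpose (\<zeta> s)) + B t s \<xi>"
        using zrel st' \<xi> unfolding Jint_def by auto
      have i1: "\<bar>X1 t s \<xi> \<bullet> z s\<bar> \<le> norm (z s) * norm (X1 t s \<xi>)"
        using Cauchy_Schwarz_ineq2[of "X1 t s \<xi>" "z s"] by (simp add: mult.commute)
      have i2: "\<bar>mdot (X2 t s \<xi>) (transpose (\<zeta> s))\<bar> \<le> cn * norm (\<zeta> s) * norm (X2 t s \<xi>)"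
        using mdotT_bound[of "X2 t s \<xi>" "\<zeta> s"] unfolding cn_def by (simp add: mult_ac)
      have "norm (tdelta1 zt t s \<xi>) \<le> norm (z s) * norm (X1 t s \<xi>) + cn * norm (\<zeta> s) * norm (X2 t s \<xi>) + \<bar>B t s \<xi>\<bar>"
        unfolding eq real_norm_def using i1 i2 by linarith
      then show "norm (tdelta1 zt t s \<xi>) \<le> Gsum L \<xi>" unfolding L_def Gsum_def by simp
    qed
    moreover have "Bsum L \<le> A1 * Q * \<delta> powr \<kappa>"
    proof -
      have bs: "Bsum L = norm (z s) * (C1 * \<delta> powr \<gamma>) + cn * norm (\<zeta> s) * (C2 * \<delta> powr (2 * \<gamma>)) + M t s"
        unfolding L_def Bsum_def by simp
      have d1: "\<delta> powr \<gamma> = \<delta> powr \<kappa> * \<delta> powr (\<gamma> - \<kappa>)" by (simp add: powr_add[symmetric])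
      have d2: "\<delta> powr (2 * \<gamma>) = \<delta> powr \<kappa> * \<delta> powr (2 * \<gamma> - \<kappa>)" by (simp add: powr_add[symmetric])
      have d3: "\<delta> powr \<theta> = \<delta> powr \<kappa> * \<delta> powr (\<gamma> + \<kappa>)" unfolding \<theta>_def by (simp add: powr_add[symmetric] algebra_simps)
      have w1: "\<delta> powr (\<gamma> - \<kappa>) \<le> 1 * Tm" using pw0[OF \<delta>, of 0 "\<gamma> - \<kappa>"] k1 k2 k3 \<epsilon> by simp
      have w2: "\<delta> powr (2 * \<gamma> - \<kappa>) \<le> e * Tm" unfolding e_def using pw0[OF \<delta>, of "\<gamma> - \<kappa>" "2 * \<gamma> - \<kappa>"] k1 k2 k3 by simp
      have i1: "z0 * \<delta> powr (\<gamma> - \<kappa>) \<le> Tm * Q" by (rule cm[OF _ w1]) (use nn Qb in auto)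
      have i2: "\<zeta>0 * \<delta> powr (2 * \<gamma> - \<kappa>) \<le> Tm * Q" by (rule cm[OF _ w2]) (use nn Qb in auto)
      have i3: "K * \<delta> powr (\<gamma> + \<kappa>) \<le> Tm * Q * SC" unfolding SC_def
      proof (rule Kp)
        show "\<delta> powr (\<gamma> + \<kappa>) \<le> e * Tm" unfolding e_def using pw0[OF \<delta>, of "\<gamma> - \<kappa>" "\<gamma> + \<kappa>"] k1 k2 k3 by simp
        show "\<delta> powr (\<gamma> + \<kappa>) \<le> 1 * Tm" using pw0[OF \<delta>, of 0 "\<gamma> + \<kappa>"] k1 k2 k3 \<epsilon> by simp
        show "\<epsilon> powr (1 - 2 * \<kappa>) * \<delta> powr (\<gamma> + \<kappa>) \<le> fp * Tm" unfolding fp_def Tm_def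
          using pw2[OF \<delta> \<epsilon>(2), of "1 - 2 * \<kappa>" "\<gamma> + \<kappa>" "1 - \<kappa>"] k1 k2 k3 by simp
        show "\<epsilon> powr (2 * \<gamma> - 2 * \<kappa>) * \<delta> powr (\<gamma> + \<kappa>) \<le> e * Tm" unfolding e_def Tm_def
          using pw2[OF \<delta> \<epsilon>(2), of "2 * \<gamma> - 2 * \<kappa>" "\<gamma> + \<kappa>" "\<gamma> - \<kappa>"] k1 k2 k3 by simp
      qed
      have p0: "0 \<le> \<delta> powr \<kappa>" by simp
      have j1: "norm (z s) * (C1 * \<delta> powr \<gamma>) \<le> C1 * \<delta> powr \<kappa> * (Tm * Q)"
      proof -
        have "norm (z s) * (C1 * \<delta> powr \<gamma>) \<le> z0 * (C1 * \<delta> powr \<gamma>)"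
          using zb[OF inI(2)] C by (intro mult_right_mono) auto
        also have "\<dots> = C1 * \<delta> powr \<kappa> * (z0 * \<delta> powr (\<gamma> - \<kappa>))" unfolding d1 by (simp add: mult_ac)
        also have "\<dots> \<le> C1 * \<delta> powr \<kappa> * (Tm * Q)" using i1 C by (intro mult_left_mono) auto
        finally show ?thesis .
      qed
      have j2: "cn * norm (\<zeta> s) * (C2 * \<delta> powr (2 * \<gamma>)) \<le> cn * C2 * \<delta> powr \<kappa> * (Tm * Q)"
      proof -
        have "cn * norm (\<zeta> s) * (C2 * \<delta> powr (2 * \<gamma>)) \<le> cn * \<zeta>0 * (C2 * \<delta> powr (2 * \<gamma>))"
          using \<zeta>b[OF inI(2)] C cn by (intro mult_right_mono mult_left_mono) auto
        also have "\<dots> = cn * C2 * \<delta> powr \<kappa> * (\<zeta>0 * \<delta> powr (2 * \<gamma> - \<kappa>))" unfolding d2 by (simp add: mult_ac)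
        also have "\<dots> \<le> cn * C2 * \<delta> powr \<kappa> * (Tm * Q)" using i2 C cn by (intro mult_left_mono) auto
        finally show ?thesis .
      qed
      have j3: "M t s \<le> Sw * \<delta> powr \<kappa> * (Tm * Q * SC)"
      proof -
        have "M t s \<le> Sw * K * \<delta> powr \<theta>" using Mb[OF st'] unfolding \<delta>_def .
        also have "\<dots> = Sw * \<delta> powr \<kappa> * (K * \<delta> powr (\<gamma> + \<kappa>))" unfolding d3 by (simp add: mult_ac)
        also have "\<dots> \<le> Sw * \<delta> powr \<kappa> * (Tm * Q * SC)" using i3 Sw by (intro mult_left_mono) auto
        finally show ?thesis .
      qed
      have "A1 * Q * \<delta> powr \<kappa> = C1 * \<delta> powr \<kappa> * (Tm * Q) + cn * C2 * \<delta> powr \<kappa> * (Tm * Q) + Sw * \<delta> powr \<kappa> * (Tm * Q * SC)"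
        unfolding A1_def by (simp add: algebra_simps)
      then show ?thesis unfolding bs using j1 j2 j3 by linarith
    qed
    ultimately show "L1N \<phi> (tdelta1 zt t s) \<le> ennreal (A1 * Q * (t - s) powr \<kappa>)" unfolding \<delta>_def
      by (meson ennreal_leI order_trans)
  qed
  have term4: "tN2 \<phi> I (2 * \<kappa>) (\<lambda>t s \<xi>. tdelta1 zt t s \<xi> - X1 t s \<xi> \<bullet> z s) \<le> ennreal (A4 * Q)"
  proof (rule tN2_le)
    show "0 \<le> A4 * Q" using A0 Q0 by simp
    fix t s assume inI: "t \<in> I" "s \<in> I" and st: "s < t"
    have st': "a \<le> s" "s < t" "t \<le> b" using inI st unfolding I_def by auto
    define \<delta> where "\<delta> = t - s"
    have \<delta>: "0 < \<delta>" "\<delta> \<le> \<epsilon>" unfolding \<delta>_def \<epsilon>_def using st' by auto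
    define L where "L = [(cn * norm (\<zeta> s), \<lambda>\<xi>. norm (X2 t s \<xi>), C2 * \<delta> powr (2 * \<gamma>)),
       (1, \<lambda>\<xi>. \<bar>B t s \<xi>\<bar>, M t s)]"
    have ok: "okL \<phi> L" unfolding okL_def L_def
      using sbm_norm[OF X2m[of s t]] X2b[of s t] Bsm[of s t] BL1[of s t]
        st' ab C cn Mnn unfolding \<delta>_def by (simp add: L1N_norm)
    have "L1N \<phi> (\<lambda>\<xi>. tdelta1 zt t s \<xi> - X1 t s \<xi> \<bullet> z s) \<le> ennreal (Bsum L)"
    proof (rule L1N_dom[OF \<phi>m ok])
      fix \<xi> :: real assume \<xi>: "\<xi> > 0"
      have eq: "tdelta1 zt t s \<xi> - X1 t s \<xi> \<bullet> z s = mdot (X2 t s \<xi>) (transpose (\<zeta> s)) + B t s \<xi>"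
        using zrel st' \<xi> unfolding Jint_def by auto
      have i2: "\<bar>mdot (X2 t s \<xi>) (transpose (\<zeta> s))\<bar> \<le> cn * norm (\<zeta> s) * norm (X2 t s \<xi>)"
        using mdotT_bound[of "X2 t s \<xi>" "\<zeta> s"] unfolding cn_def by (simp add: mult_ac)
      have "norm (tdelta1 zt t s \<xi> - X1 t s \<xi> \<bullet> z s) \<le> cn * norm (\<zeta> s) * norm (X2 t s \<xi>) + \<bar>B t s \<xi>\<bar>"
        unfolding eq real_norm_def using i2 by linarith
      then show "norm (tdelta1 zt t s \<xi> - X1 t s \<xi> \<bullet> z s) \<le> Gsum L \<xi>" unfolding L_def Gsum_def by simp
    qed
    moreover have "Bsum L \<le> A4 * Q * \<delta> powr (2 * \<kappa>)"
    proof -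
      have bs: "Bsum L = cn * norm (\<zeta> s) * (C2 * \<delta> powr (2 * \<gamma>)) + M t s"
        unfolding L_def Bsum_def by simp
      have d2: "\<delta> powr (2 * \<gamma>) = \<delta> powr (2 * \<kappa>) * \<delta> powr (2 * \<gamma> - 2 * \<kappa>)" by (simp add: powr_add[symmetric])
      have d3: "\<delta> powr \<theta> = \<delta> powr (2 * \<kappa>) * \<delta> powr \<gamma>" unfolding \<theta>_def by (simp add: powr_add[symmetric] algebra_simps)
      have w2: "\<delta> powr (2 * \<gamma> - 2 * \<kappa>) \<le> e * Tm" unfolding e_def using pw0[OF \<delta>, of "\<gamma> - \<kappa>" "2 * \<gamma> - 2 * \<kappa>"] k1 k2 k3 by simp
      have i2: "\<zeta>0 * \<delta> powr (2 * \<gamma> - 2 * \<kappa>) \<le> Tm * Q" by (rule cm[OF _ w2]) (use nn Qb in auto)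
      have i3: "K * \<delta> powr \<gamma> \<le> Tm * Q * SC" unfolding SC_def
      proof (rule Kp)
        show "\<delta> powr \<gamma> \<le> e * Tm" unfolding e_def using pw0[OF \<delta>, of "\<gamma> - \<kappa>" "\<gamma>"] k1 k2 k3 by simp
        show "\<delta> powr \<gamma> \<le> 1 * Tm" using pw0[OF \<delta>, of 0 "\<gamma>"] k1 k2 k3 \<epsilon> by simp
        show "\<epsilon> powr (1 - 2 * \<kappa>) * \<delta> powr \<gamma> \<le> fp * Tm" unfolding fp_def Tm_def
          using pw2[OF \<delta> \<epsilon>(2), of "1 - 2 * \<kappa>" "\<gamma>" "1 - \<kappa>"] k1 k2 k3 by simp
        show "\<epsilon> powr (2 * \<gamma> - 2 * \<kappa>) * \<delta> powr \<gamma> \<le> e * Tm" unfolding e_def Tm_def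
          using pw2[OF \<delta> \<epsilon>(2), of "2 * \<gamma> - 2 * \<kappa>" "\<gamma>" "\<gamma> - \<kappa>"] k1 k2 k3 by simp
      qed
      have j2: "cn * norm (\<zeta> s) * (C2 * \<delta> powr (2 * \<gamma>)) \<le> cn * C2 * \<delta> powr (2 * \<kappa>) * (Tm * Q)"
      proof -
        have "cn * norm (\<zeta> s) * (C2 * \<delta> powr (2 * \<gamma>)) \<le> cn * \<zeta>0 * (C2 * \<delta> powr (2 * \<gamma>))"
          using \<zeta>b[OF inI(2)] C cn by (intro mult_right_mono mult_left_mono) auto
        also have "\<dots> = cn * C2 * \<delta> powr (2 * \<kappa>) * (\<zeta>0 * \<delta> powr (2 * \<gamma> - 2 * \<kappa>))" unfolding d2 by (simp add: mult_ac)
        also have "\<dots> \<le> cn * C2 * \<delta> powr (2 * \<kappa>) * (Tm * Q)" using i2 C cn by (intro mult_left_mono) auto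
        finally show ?thesis .
      qed
      have j3: "M t s \<le> Sw * \<delta> powr (2 * \<kappa>) * (Tm * Q * SC)"
      proof -
        have "M t s \<le> Sw * K * \<delta> powr \<theta>" using Mb[OF st'] unfolding \<delta>_def .
        also have "\<dots> = Sw * \<delta> powr (2 * \<kappa>) * (K * \<delta> powr \<gamma>)" unfolding d3 by (simp add: mult_ac)
        also have "\<dots> \<le> Sw * \<delta> powr (2 * \<kappa>) * (Tm * Q * SC)" using i3 Sw by (intro mult_left_mono) auto
        finally show ?thesis .
      qed
      have "A4 * Q * \<delta> powr (2 * \<kappa>) = cn * C2 * \<delta> powr (2 * \<kappa>) * (Tm * Q) + Sw * \<delta> powr (2 * \<kappa>) * (Tm * Q * SC)"
        unfolding A4_def by (simp add: algebra_simps)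
      then show ?thesis unfolding bs using j2 j3 by linarith
    qed
    ultimately show "L1N \<phi> ((\<lambda>t s \<xi>. tdelta1 zt t s \<xi> - X1 t s \<xi> \<bullet> z s) t s) \<le> ennreal (A4 * Q * (t - s) powr (2 * \<kappa>))"
      unfolding \<delta>_def by (meson ennreal_leI order_trans)
  qed
  have termh: "pNhol I \<kappa> z \<le> ennreal (Ah * Q)"
  proof (rule pNhol_le)
    show "0 \<le> Ah * Q" using A0 Q0 by simp
    fix t s assume inI: "t \<in> I" "s \<in> I" and st: "s < t"
    define \<delta> where "\<delta> = t - s"
    have \<delta>: "0 < \<delta>" "\<delta> \<le> \<epsilon>" unfolding \<delta>_def \<epsilon>_def using inI st unfolding I_def by auto
    have eq: "z t - z s = f t s + x1_of \<phi> X1 t s v* \<zeta> s + r t s"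
      using zdec[OF inI(2,1)] st by (simp add: algebra_simps)
    have v: "norm (x1_of \<phi> X1 t s v* \<zeta> s) \<le> cn * (C1 * \<delta> powr \<gamma> * \<zeta>0)"
    proof -
      have "norm (x1_of \<phi> X1 t s v* \<zeta> s) \<le> cn * (norm (x1_of \<phi> X1 t s) * norm (\<zeta> s))"
        using vm_bound unfolding cn_def .
      also have "\<dots> \<le> cn * (C1 * \<delta> powr \<gamma> * \<zeta>0)"
        using x1b[OF inI(2,1) st] \<zeta>b[OF inI(2)] cn C unfolding \<delta>_def
        by (intro mult_left_mono mult_mono) auto
      finally show ?thesis .
    qed
    have "norm (z t - z s) \<le> norm (f t s) + norm (x1_of \<phi> X1 t s v* \<zeta> s) + norm (r t s)"
      unfolding eq by (meson norm_triangle_le norm_triangle_ineq add_mono order_refl order_trans)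
    also have "\<dots> \<le> F * \<delta> + cn * (C1 * \<delta> powr \<gamma> * \<zeta>0) + R * \<delta> powr (2 * \<kappa>)"
      using fb[OF inI(2,1) st] v rb[OF inI(2,1) st] unfolding \<delta>_def by linarith
    also have "\<dots> \<le> Ah * Q * \<delta> powr \<kappa>"
    proof -
      have d1: "\<delta> = \<delta> powr \<kappa> * \<delta> powr (1 - \<kappa>)"
      proof -
        have "\<delta> powr \<kappa> * \<delta> powr (1 - \<kappa>) = \<delta> powr 1" by (simp only: powr_add[symmetric]) simp
        then show ?thesis using \<delta> by simp
      qed
      have d2: "\<delta> powr \<gamma> = \<delta> powr \<kappa> * \<delta> powr (\<gamma> - \<kappa>)" by (simp add: powr_add[symmetric])
      have d3: "\<delta> powr (2 * \<kappa>) = \<delta> powr \<kappa> * \<delta> powr \<kappa>" by (simp add: powr_add[symmetric])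
      have w1: "\<delta> powr (1 - \<kappa>) \<le> fp * Tm" unfolding fp_def using pw0[OF \<delta>, of "1 - \<kappa>" "1 - \<kappa>"] k1 k2 k3 by simp
      have w2: "\<delta> powr (\<gamma> - \<kappa>) \<le> e * Tm" unfolding e_def using pw0[OF \<delta>, of "\<gamma> - \<kappa>" "\<gamma> - \<kappa>"] k1 k2 k3 by simp
      have w3: "\<delta> powr \<kappa> \<le> e * Tm" unfolding e_def using pw0[OF \<delta>, of "\<gamma> - \<kappa>" "\<kappa>"] k1 k2 k3 by simp
      have i1: "F * \<delta> powr (1 - \<kappa>) \<le> Tm * Q" by (rule cm[OF _ w1]) (use nn Qb in auto)
      have i2: "\<zeta>0 * \<delta> powr (\<gamma> - \<kappa>) \<le> Tm * Q" by (rule cm[OF _ w2]) (use nn Qb in auto)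
      have i3: "R * \<delta> powr \<kappa> \<le> Tm * Q" by (rule cm[OF _ w3]) (use nn Qb in auto)
      have p0: "0 \<le> \<delta> powr \<kappa>" by simp
      have j1: "F * \<delta> \<le> \<delta> powr \<kappa> * (Tm * Q)"
      proof -
        have "F * \<delta> = \<delta> powr \<kappa> * (F * \<delta> powr (1 - \<kappa>))" by (subst d1) (simp add: mult_ac)
        also have "\<dots> \<le> \<delta> powr \<kappa> * (Tm * Q)" by (rule mult_left_mono[OF i1 p0])
        finally show ?thesis .
      qed
      have j2: "cn * (C1 * \<delta> powr \<gamma> * \<zeta>0) \<le> cn * C1 * \<delta> powr \<kappa> * (Tm * Q)"
      proof -
        have "cn * (C1 * \<delta> powr \<gamma> * \<zeta>0) = cn * C1 * \<delta> powr \<kappa> * (\<zeta>0 * \<delta> powr (\<gamma> - \<kappa>))" unfolding d2 by (simp add: mult_ac)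
        also have "\<dots> \<le> cn * C1 * \<delta> powr \<kappa> * (Tm * Q)" using i2 C cn by (intro mult_left_mono) auto
        finally show ?thesis .
      qed
      have j3: "R * \<delta> powr (2 * \<kappa>) \<le> \<delta> powr \<kappa> * (Tm * Q)"
      proof -
        have "R * \<delta> powr (2 * \<kappa>) = \<delta> powr \<kappa> * (R * \<delta> powr \<kappa>)" unfolding d3 by (simp add: mult_ac)
        also have "\<dots> \<le> \<delta> powr \<kappa> * (Tm * Q)" by (rule mult_left_mono[OF i3 p0])
        finally show ?thesis .
      qed
      have "Ah * Q * \<delta> powr \<kappa> = \<delta> powr \<kappa> * (Tm * Q) + cn * C1 * \<delta> powr \<kappa> * (Tm * Q) + \<delta> powr \<kappa> * (Tm * Q)"
        unfolding Ah_def by (simp add: algebra_simps)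
      then show ?thesis using j1 j2 j3 by linarith
    qed
    finally show "norm (z t - z s) \<le> Ah * Q * (t - s) powr \<kappa>" unfolding \<delta>_def .
  qed
  have z0e: "pN0 {a..b} z = ennreal z0" unfolding z0_def using z0fin by simp
  have Fe: "pN2 {a..b} 1 f = ennreal F" unfolding F_def using fN by simp
  have QNle: "QN \<phi> X1 {a..b} \<kappa> zt z \<le> ennreal ((1 + A1 + A4 + Ah) * Q)"
  proof -
    have "QN \<phi> X1 {a..b} \<kappa> zt z \<le> ennreal (A1 * Q) + ennreal z0 + ennreal (Ah * Q) + ennreal (A4 * Q)"
      unfolding QN_def z0e using term1 term4 termh unfolding I_def by (intro add_mono) auto
    also have "\<dots> = ennreal (A1 * Q + z0 + Ah * Q + A4 * Q)"
      using A0 Q0 nn by (simp add: ennreal_plus[symmetric] del: ennreal_plus)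
    also have "\<dots> \<le> ennreal ((1 + A1 + A4 + Ah) * Q)"
      using Qb(1) by (intro ennreal_leI) (simp add: algebra_simps)
    finally show ?thesis .
  qed
  have RHS: "pN0 {a..b} z + ennreal ((b - a) powr (\<gamma> - \<kappa>)) * MA a b \<kappa> z \<zeta> r
                       + ennreal ((b - a) powr (1 - \<kappa>)) * pN2 {a..b} 1 f = ennreal Q"
  proof -
    have m0: "0 \<le> m" unfolding m_def using nn by simp
    have "ennreal e * ennreal m = ennreal (e * m)" using e0 m0 by (simp add: ennreal_mult)
    moreover have "ennreal fp * ennreal F = ennreal (fp * F)" using e0 nn by (simp add: ennreal_mult)
    moreover have "ennreal z0 + ennreal (e * m) + ennreal (fp * F) = ennreal Q"
      unfolding Q_def using nn e0 m0 by (simp add: ennreal_plus)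
    ultimately show ?thesis unfolding z0e Fe MAr e_def fp_def \<epsilon>_def by simp
  qed
  have Deq: "(1 + max 1 T * (C1 + real (CARD('n))^2 * C2 + 1 / (1 - 2 powr (1 - (\<gamma> + 2 * \<kappa>))) * (2 * C1 + real (CARD('n))^2 * C2 + real (CARD('n))^2 * C3))
            + max 1 T * (real (CARD('n))^2 * C2 + 1 / (1 - 2 powr (1 - (\<gamma> + 2 * \<kappa>))) * (2 * C1 + real (CARD('n))^2 * C2 + real (CARD('n))^2 * C3))
            + max 1 T * (2 + real (CARD('n))^2 * C1)) = 1 + A1 + A4 + Ah"
    unfolding A1_def A4_def Ah_def Tm_def cn_def Sw_def SC_def \<theta>_def by simp
  show ?thesis unfolding Deq RHS using QNle Q0 by (simp add: ennreal_mult'' del: ennreal_plus)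
qed



theorem proposition4p14:
  fixes \<phi> :: "real \<Rightarrow> real" and T \<gamma> \<kappa> :: real
    and X1 :: "real \<Rightarrow> real \<Rightarrow> real \<Rightarrow> real^'n"
    and X2 :: "real \<Rightarrow> real \<Rightarrow> real \<Rightarrow> real^'n^'n"
    and X3 :: "real \<Rightarrow> real \<Rightarrow> real \<Rightarrow> real \<Rightarrow> real^'n^'n"
  assumes "set_borel_measurable lborel {0<..} \<phi>"
    and "0 < T"
    and "1/3 < \<kappa>" and "\<kappa> < \<gamma>" and "\<gamma> < 1/2"
    and "hypH \<phi> T \<gamma> X1 X2 X3"
  shows "\<exists>c>0. \<forall>(a::real) (b::real) (f::real \<Rightarrow> real \<Rightarrow> real^'n) (h::real^'n) (z::real \<Rightarrow> real^'n)
             (\<zeta>::real \<Rightarrow> real^'n^'n) (r::real \<Rightarrow> real \<Rightarrow> real^'n) (ht::real \<Rightarrow> real)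
             (zt::real \<Rightarrow> real \<Rightarrow> real) (\<mu>::real) (B::real \<Rightarrow> real \<Rightarrow> real \<Rightarrow> real).
     0 \<le> a \<longrightarrow> a < b \<longrightarrow> b \<le> T \<longrightarrow>
     pN2 {a..b} 1 f < \<infinity> \<longrightarrow>
     inA \<phi> X1 a b \<kappa> \<gamma> f h z \<zeta> r \<longrightarrow>
     isLambda \<phi> a b \<mu> (Hterm X1 X2 X3 f \<zeta> r) B \<longrightarrow>
     inL1 \<phi> ht \<longrightarrow> zt a = ht \<longrightarrow>
     (\<forall>s t. a \<le> s \<longrightarrow> s \<le> t \<longrightarrow> t \<le> b \<longrightarrow>
        (\<forall>\<xi>>0. tdelta1 zt t s \<xi> = Jint X1 X2 z \<zeta> B t s \<xi>)) \<longrightarrow>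
     QN \<phi> X1 {a..b} \<kappa> zt z
       \<le> ennreal c * (pN0 {a..b} z + ennreal ((b - a) powr (\<gamma> - \<kappa>)) * MA a b \<kappa> z \<zeta> r
                       + ennreal ((b - a) powr (1 - \<kappa>)) * pN2 {a..b} 1 f)"
proof -
  note \<phi>m = assms(1) and k1 = assms(3) and k2 = assms(4) and k3 = assms(5)
  have H: "tC2 \<phi> {0..T} \<gamma> X1" "tC2 \<phi> {0..T} (2 * \<gamma>) X2" "tC3 \<phi> {0..T} (3 * \<gamma>) X3"
    using assms(6) unfolding hypH_def by auto
  define C1 where "C1 = enn2real (tN2 \<phi> {0..T} \<gamma> X1)"
  define C2 where "C2 = enn2real (tN2 \<phi> {0..T} (2 * \<gamma>) X2)"
  obtain C3 where C3: "0 \<le> C3" and X3b: "\<forall>t u s. t \<in> {0..T} \<longrightarrow> u \<in> {0..T} \<longrightarrow> s \<in> {0..T} \<longrightarrow> s < u \<longrightarrow> u < t \<longrightarrow>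
     L1N \<phi> (X3 t u s) \<le> ennreal (C3 * (t - s) powr (3 * \<gamma>))"
    using X3_const[OF \<phi>m H(3)] k1 k2 by auto
  have C: "0 \<le> C1" "0 \<le> C2" "0 \<le> C3" using C3 unfolding C1_def C2_def by auto
  have fin12: "tN2 \<phi> {0..T} \<gamma> X1 < \<infinity>" "tN2 \<phi> {0..T} (2 * \<gamma>) X2 < \<infinity>"
    using H unfolding tC2_def by auto
  have X1b: "\<And>t s. 0 \<le> s \<Longrightarrow> s < t \<Longrightarrow> t \<le> T \<Longrightarrow> L1N \<phi> (X1 t s) \<le> ennreal (C1 * (t - s) powr \<gamma>)"
    unfolding C1_def using tN2_bound[OF fin12(1)] by auto
  have X2b: "\<And>t s. 0 \<le> s \<Longrightarrow> s < t \<Longrightarrow> t \<le> T \<Longrightarrow> L1N \<phi> (X2 t s) \<le> ennreal (C2 * (t - s) powr (2 * \<gamma>))"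
    unfolding C2_def using tN2_bound[OF fin12(2)] by auto
  have X3b': "\<And>t u s. 0 \<le> s \<Longrightarrow> s < u \<Longrightarrow> u < t \<Longrightarrow> t \<le> T \<Longrightarrow> L1N \<phi> (X3 t u s) \<le> ennreal (C3 * (t - s) powr (3 * \<gamma>))"
    using X3b by auto
  have X1m: "\<And>t s. 0 \<le> s \<Longrightarrow> s \<le> t \<Longrightarrow> t \<le> T \<Longrightarrow> set_borel_measurable lborel {0<..} (X1 t s)"
    using H(1) unfolding tC2_def cont2_def inL1_def by auto
  have X2m: "\<And>t s. 0 \<le> s \<Longrightarrow> s \<le> t \<Longrightarrow> t \<le> T \<Longrightarrow> set_borel_measurable lborel {0<..} (X2 t s)"
    using H(2) unfolding tC2_def cont2_def inL1_def by auto
  have X3m: "\<And>t u s. 0 \<le> s \<Longrightarrow> s \<le> u \<Longrightarrow> u \<le> t \<Longrightarrow> t \<le> T \<Longrightarrow> set_borel_measurable lborel {0<..} (X3 t u s)"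
    using H(3) unfolding tC3_def cont3_def inL1_def by auto
  define D where "D = (1 + max 1 T * (C1 + real (CARD('n))^2 * C2 + 1 / (1 - 2 powr (1 - (\<gamma> + 2 * \<kappa>))) * (2 * C1 + real (CARD('n))^2 * C2 + real (CARD('n))^2 * C3))
            + max 1 T * (real (CARD('n))^2 * C2 + 1 / (1 - 2 powr (1 - (\<gamma> + 2 * \<kappa>))) * (2 * C1 + real (CARD('n))^2 * C2 + real (CARD('n))^2 * C3))
            + max 1 T * (2 + real (CARD('n))^2 * C1))"
  have sw: "0 < 1 / (1 - 2 powr (1 - (\<gamma> + 2 * \<kappa>)))" using k1 k2 by (auto intro!: powr_less_one)
  have D: "0 < D" unfolding D_def using C sw
    by (intro add_pos_nonneg mult_nonneg_nonneg add_nonneg_nonneg) auto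
  show ?thesis
  proof (intro exI[of _ D] conjI allI impI)
    show "0 < D" by (rule D)
    fix a b :: real and f :: "real \<Rightarrow> real \<Rightarrow> real^'n" and h z \<zeta> r ht zt \<mu> B
    assume ab: "0 \<le> a" "a < b" "b \<le> T" and fN: "pN2 {a..b} 1 f < \<infinity>"
      and zA: "inA \<phi> X1 a b \<kappa> \<gamma> f h z \<zeta> r" and BL: "isLambda \<phi> a b \<mu> (Hterm X1 X2 X3 f \<zeta> r) B"
      and "inL1 \<phi> ht" "zt a = ht"
      and zrel: "\<forall>s t. a \<le> s \<longrightarrow> s \<le> t \<longrightarrow> t \<le> b \<longrightarrow> (\<forall>\<xi>>0. tdelta1 zt t s \<xi> = Jint X1 X2 z \<zeta> B t s \<xi>)"
    show "QN \<phi> X1 {a..b} \<kappa> zt z \<le> ennreal D * (pN0 {a..b} z + ennreal ((b - a) powr (\<gamma> - \<kappa>)) * MA a b \<kappa> z \<zeta> r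
                       + ennreal ((b - a) powr (1 - \<kappa>)) * pN2 {a..b} 1 f)"
    proof (cases "pN0 {a..b} z = \<infinity> \<or> MA a b \<kappa> z \<zeta> r = \<infinity>")
      case False
      then have fins: "pN0 {a..b} z < \<infinity>" "MA a b \<kappa> z \<zeta> r < \<infinity>" by (auto simp: top.not_eq_extremum)
      show ?thesis unfolding D_def
        by (rule main_bound[OF \<phi>m k1 k2 k3 ab C X1m X2m X3m X1b X2b X3b' fN zA BL zrel fins])
    next
      case True
      have pos: "0 < (b - a) powr (\<gamma> - \<kappa>)" using ab by simp
      from True have Seq: "pN0 {a..b} z + ennreal ((b - a) powr (\<gamma> - \<kappa>)) * MA a b \<kappa> z \<zeta> r
                       + ennreal ((b - a) powr (1 - \<kappa>)) * pN2 {a..b} 1 f = \<infinity>"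
        using pos by (auto simp: ennreal_mult_eq_top_iff)
      have "ennreal D * (pN0 {a..b} z + ennreal ((b - a) powr (\<gamma> - \<kappa>)) * MA a b \<kappa> z \<zeta> r
                       + ennreal ((b - a) powr (1 - \<kappa>)) * pN2 {a..b} 1 f) = top"
        unfolding Seq using D by (simp add: ennreal_mult_eq_top_iff)
      then show ?thesis by simp
    qed
  qed
qed


end
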